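(* Let $k\ge2$ be an integer, $s_0\in(0,1)$, $i_0\in(0,1)$, $\tau,\eta,\lambda>0$, $f(v):=s_0(1-e^{-\tau v})-\eta v$ and $\mathscr{R}_0:=s_0\tau/\eta$. Assume $\mathscr{R}_0>1$ and $0<\lambda<\lambda_c$, where $\lambda_c:=\frac{\eta(\mathscr{R}_0-1)}{k+1-2\sqrt{k}}$. Define $$c_*^k:=\min_{\gamma>0}\frac{\eta(\mathscr{R}_0-1)+\lambda\left(e^{\gamma}-(k+1)+ke^{-\gamma}\right)}{\gamma}>0.$$ Let $(\mathcal{I}_n^\infty)_{n\ge1}$ be the unique positive bounded solution of $0=f(\mathcal{I}_n)+\lambda(\mathcal{I}_{n-1}-(k+1)\mathcal{I}_n+k\mathcal{I}_{n+1})$ for $n\ge2$, $0=f(\mathcal{I}_1)+i_0+\lambda(k+1)(-\mathcal{I}_1+\mathcal{I}_2)$, and let $(\mathcal{I}_n(t))_{n\ge1}$ solve $$\begin{cases}\mathcal{I}_n'(t)=f(\mathcal{I}_n(t))+\lambda\left(\mathcal{I}_{n-1}(t)-(k+1)\mathcal{I}_n(t)+k\mathcal{I}_{n+1}(t)\right), & n\ge2,\\ \mathcal{I}_1'(t)=f(\mathcal{I}_1(t))+i_0+\lambda(k+1)\left(-\mathcal{I}_1(t)+\mathcal{I}_2(t)\right),\end{cases}\qquad \mathcal{I}_n(0)=0\ \forall n\ge1.$$ Then: (i) for every $c\in(0,c_*^k)$, $\lim_{t\to+\infty}\sup_{1\le n\le ct}|\mathcal{I}_n(t)-\mathcal{I}_n^\infty|=0$;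 (ii) for every $c>c_*^k$, $\lim_{t\to+\infty}\sup_{n\ge ct}|\mathcal{I}_n(t)|=0$.
   Context: The system describes the cumulative density of infected individuals in an SIR model on the homogeneous tree of degree $k$ with infection initially only at the root, $\mathcal{I}_n$ being the common value at vertices at distance $n-1$ from the root. *)

theory Defs
  imports "HOL-Analysis.Analysis"
begin

definition sir_f :: "real \<Rightarrow> real \<Rightarrow> real \<Rightarrow> real \<Rightarrow> real" where
  "sir_f s0 tau eta v = s0 * (1 - exp (- tau * v)) - eta * v"

definition R0 :: "real \<Rightarrow> real \<Rightarrow> real \<Rightarrow> real" where
  "R0 s0 tau eta = s0 * tau / eta"

definition lambda_c :: "nat \<Rightarrow> real \<Rightarrow> real \<Rightarrow> real \<Rightarrow> real" where
  "lambda_c k s0 tau eta = eta * (R0 s0 tau eta - 1) / (real k + 1 - 2 * sqrt (real k))"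

text \<open>Spreading speed c_*^k = min over gamma > 0 of the given expression
  (written as an infimum; the minimum is attained).\<close>
definition cstar :: "nat \<Rightarrow> real \<Rightarrow> real \<Rightarrow> real \<Rightarrow> real \<Rightarrow> real" where
  "cstar k s0 tau eta lam =
     (INF gamma\<in>{0<..}. (eta * (R0 s0 tau eta - 1)
        + lam * (exp gamma - (real k + 1) + real k * exp (- gamma))) / gamma)"

end

theory Submission
  imports Defs
begin

lemma left_closed_le:
  fixes g :: "real \<Rightarrow> real"
  assumes "continuous_on {a..b} g" "a < t0" "t0 \<le> b" "\<And>s. a \<le> s \<Longrightarrow> s < t0 \<Longrightarrow> g s \<le> 0"
  shows "g t0 \<le> 0"
proof -
  have "(g \<longlongrightarrow> g t0) (at t0 within {a..b})"
    using assms(1-3) by (simp add: continuous_on_def)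
  hence "(g \<longlongrightarrow> g t0) (at t0 within {a..<t0})"
    by (rule tendsto_within_subset) (use assms(3) in auto)
  moreover have "at t0 within {a..<t0} \<noteq> bot"
    using assms(2) by (simp add: trivial_limit_within islimpt_Ico)
  moreover have "eventually (\<lambda>s. g s \<le> 0) (at t0 within {a..<t0})"
    using assms(4) by (auto simp: eventually_at_filter)
  ultimately show ?thesis
    using tendsto_upperbound by blast
qed

definition dini_le :: "(real \<Rightarrow> real) \<Rightarrow> real \<Rightarrow> real \<Rightarrow> bool" where
  "dini_le g t D \<longleftrightarrow> (\<forall>r>D. eventually (\<lambda>s. g s \<le> g t + r * (s - t)) (at_right t))"

lemma dini_le_neg:
  assumes "dini_le g t D" "D < 0"
  shows "eventually (\<lambda>s. g s < g t) (at_right t)"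
proof -
  have "D < D/2" using assms(2) by simp
  hence "eventually (\<lambda>s. g s \<le> g t + (D/2) * (s - t)) (at_right t)"
    using assms(1) unfolding dini_le_def by blast
  moreover have "eventually (\<lambda>s. s > t) (at_right t)"
    by (rule eventually_at_right_less)
  ultimately show ?thesis
  proof eventually_elim
    case (elim s)
    have "(D/2) * (s - t) < 0" using elim assms(2) by (simp add: mult_neg_pos)
    thus ?case using elim by linarith
  qed
qed

lemma cont_ev_neg:
  fixes g :: "real \<Rightarrow> real"
  assumes "continuous_on {a..b} g" "a \<le> t" "t < b" "g t < 0"
  shows "eventually (\<lambda>s. g s < 0) (at_right t)"
proof -
  have "(g \<longlongrightarrow> g t) (at t within {a..b})"
    using assms(1-3) by (simp add: continuous_on_def)
  hence "(g \<longlongrightarrow> g t) (at t within {t<..<b})"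
    by (rule tendsto_within_subset) (use assms(2) in auto)
  hence "eventually (\<lambda>s. g s < 0) (at t within {t<..<b})"
    using assms(4) order_tendstoD(2) by blast
  moreover have "eventually (\<lambda>s. s < b) (at_right t)"
    using assms(3) by (simp add: eventually_at_right_field) (metis)
  ultimately show ?thesis
    unfolding eventually_at_filter by eventually_elim auto
qed

lemma comparison:
  fixes d :: "nat \<Rightarrow> real \<Rightarrow> real" and p q :: "nat \<Rightarrow> real"
  assumes ab: "a \<le> b"
    and cont: "\<And>n. n \<ge> 1 \<Longrightarrow> continuous_on {a..b} (d n)"
    and bdd: "\<And>n t. n \<ge> 1 \<Longrightarrow> t \<in> {a..b} \<Longrightarrow> d n t \<le> B"
    and init: "\<And>n. n \<ge> 1 \<Longrightarrow> d n a \<le> 0"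
    and p0: "\<And>n. 0 \<le> p n" and pP: "\<And>n. p n \<le> P"
    and q0: "\<And>n. 0 \<le> q n" and qQ: "\<And>n. q n \<le> Q"
    and dini: "\<And>n t. n \<ge> 1 \<Longrightarrow> a \<le> t \<Longrightarrow> t < b \<Longrightarrow> d n t > 0 \<Longrightarrow>
       dini_le (d n) t (K * d n t + (if n \<ge> 2 then p n * d (n-1) t else 0) + q n * d (n+1) t)"
  shows "\<forall>n\<ge>1. \<forall>t\<in>{a..b}. d n t \<le> 0"
proof -
  define L where "L = \<bar>K\<bar> + P + 2 * Q + 1"
  have P0: "P \<ge> 0" using p0 pP order_trans by blast
  have Q0: "Q \<ge> 0" using q0 qQ order_trans by blast
  have main: "\<forall>n\<ge>1. \<forall>t\<in>{a..b}. d n t \<le> \<epsilon> * exp (L * (t - a)) * n" if eps: "\<epsilon> > 0" for \<epsilon>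
  proof -
    define z where "z n t = d n t - \<epsilon> * exp (L * (t - a)) * n" for n t
    obtain N :: nat where N: "B < \<epsilon> * N"
      using reals_Archimedean3[OF eps] by (metis mult.commute)
    have big: "z n t < 0" if "n \<ge> N" "n \<ge> 1" "t \<in> {a..b}" for n t
    proof -
      have "exp (L * (t - a)) \<ge> 1" using that(3) L_def P0 Q0 by auto
      hence "\<epsilon> * exp (L * (t - a)) * n \<ge> \<epsilon> * 1 * n"
        using eps by (intro mult_right_mono mult_left_mono) auto
      moreover have "\<epsilon> * n \<ge> \<epsilon> * N" using that(1) eps by simp
      ultimately show ?thesis using bdd[OF that(2,3)] N unfolding z_def by linarith
    qed
    have zcont: "continuous_on {a..b} (z n)" if "n \<ge> 1" for n
      unfolding z_def by (intro continuous_intros cont that)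
    define G where "G = {t\<in>{a..b}. \<forall>s\<in>{a..t}. \<forall>n\<ge>1. z n s \<le> 0}"
    have aG: "a \<in> G"
    proof -
      have "d n a \<le> \<epsilon> * real n" if "n \<ge> 1" for n
        using init[OF that] eps by (smt (verit) of_nat_0_le_iff mult_nonneg_nonneg)
      thus ?thesis unfolding G_def z_def using ab by auto
    qed
    have Gb: "\<And>t. t \<in> G \<Longrightarrow> t \<le> b" unfolding G_def by auto
    have bddG: "bdd_above G" unfolding bdd_above_def using Gb by blast
    define t0 where "t0 = Sup G"
    have t0a: "a \<le> t0" unfolding t0_def using aG bddG by (rule cSup_upper)
    have t0b: "t0 \<le> b" unfolding t0_def using aG Gb by (intro cSup_least) auto
    have below: "z n s \<le> 0" if "n \<ge> 1" "a \<le> s" "s < t0" for n s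
    proof -
      obtain t where "t \<in> G" "s < t" using \<open>s < t0\<close> unfolding t0_def
        using less_cSup_iff[OF _ bddG] aG by blast
      thus ?thesis using that unfolding G_def by auto
    qed
    have at0: "z n t0 \<le> 0" if "n \<ge> 1" for n
    proof (cases "a < t0")
      case True
      show ?thesis
        by (rule left_closed_le[OF zcont[OF that] True t0b]) (use below that in auto)
    next
      case False
      hence "t0 = a" using t0a by simp
      thus ?thesis using aG that unfolding G_def by auto
    qed
    have t0G: "t0 \<in> G"
    proof -
      have "z n s \<le> 0" if "n \<ge> 1" "s \<in> {a..t0}" for n s
      proof (cases "s < t0")
        case True thus ?thesis using below that by auto
      next
        case False hence "s = t0" using that by auto
        thus ?thesis using at0 that by auto
      qed
      thus ?thesis unfolding G_def using t0a t0b by auto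
    qed
    have "t0 = b"
    proof (rule ccontr)
      assume "t0 \<noteq> b"
      hence t0lt: "t0 < b" using t0b by simp
      have evn: "eventually (\<lambda>s. z n s \<le> 0) (at_right t0)" if n1: "n \<ge> 1" and nN: "n < N" for n
      proof (cases "z n t0 < 0")
        case True
        show ?thesis using cont_ev_neg[OF zcont[OF n1] t0a t0lt True]
          by eventually_elim simp
      next
        case False
        hence z0: "z n t0 = 0" using at0[OF n1] by simp
        define E where "E = \<epsilon> * exp (L * (t0 - a))"
        have Epos: "E > 0" unfolding E_def using eps by simp
        have dn: "d n t0 = E * n" using z0 unfolding z_def E_def by simp
        have dpos: "d n t0 > 0" using dn Epos n1 by simp
        have dj: "d j t0 \<le> E * j" if "j \<ge> 1" for j
          using at0[OF that] unfolding z_def E_def by simp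
        define D where "D = K * d n t0 + (if n \<ge> 2 then p n * d (n-1) t0 else 0) + q n * d (n+1) t0"
        have dl: "dini_le (d n) t0 D" unfolding D_def by (rule dini[OF n1 t0a t0lt dpos])
        have t1: "(if n \<ge> 2 then p n * d (n-1) t0 else 0) \<le> P * E * n"
        proof (cases "n \<ge> 2")
          case True
          have "p n * d (n-1) t0 \<le> p n * (E * (n - 1))"
            using dj[of "n-1"] True p0[of n] by (intro mult_left_mono) (auto simp: of_nat_diff)
          also have "\<dots> \<le> P * (E * n)"
            using p0[of n] pP[of n] Epos P0 by (intro mult_mono) auto
          finally show ?thesis using True by simp
        next
          case False
          thus ?thesis using P0 Epos by simp
        qed
        have t2: "q n * d (n+1) t0 \<le> Q * E * (2 * n)"
        proof -
          have "q n * d (n+1) t0 \<le> q n * (E * (n + 1))"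
            using dj[of "n+1"] q0[of n] by (intro mult_left_mono) auto
          also have "\<dots> \<le> Q * (E * (2 * n))"
            using q0[of n] qQ[of n] Epos Q0 n1 by (intro mult_mono) auto
          finally show ?thesis by simp
        qed
        have t3: "K * d n t0 \<le> \<bar>K\<bar> * E * n" using dn Epos n1
          by (simp add: mult_right_mono mult.assoc)
        have DL: "D < L * E * n"
        proof -
          have "D \<le> (\<bar>K\<bar> + P + 2 * Q) * E * n" unfolding D_def using t1 t2 t3
            by (simp add: algebra_simps)
          also have "\<dots> < L * E * n" unfolding L_def using Epos n1 by simp
          finally show ?thesis .
        qed
        have hd: "((\<lambda>s. \<epsilon> * exp (L * (s - a)) * n) has_real_derivative (L * E * n)) (at t0)"
          unfolding E_def by (auto intro!: derivative_eq_intros)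
        have "((\<lambda>s. (\<epsilon> * exp (L * (s - a)) * n - (\<epsilon> * exp (L * (t0 - a)) * n)) / (s - t0))
                 \<longlongrightarrow> L * E * n) (at_right t0)"
          using hd unfolding has_field_derivative_iff
          by (rule filterlim_mono) (auto simp: at_le)
        moreover have "(D + L * E * n) / 2 < L * E * n" using DL by (simp add: field_simps)
        ultimately have ev1: "eventually (\<lambda>s. (\<epsilon> * exp (L * (s - a)) * n - (\<epsilon> * exp (L * (t0 - a)) * n)) / (s - t0)
                 > (D + L * E * n) / 2) (at_right t0)"
          using order_tendstoD(1) by blast
        have ev2: "eventually (\<lambda>s. d n s \<le> d n t0 + ((D + L * E * n) / 2) * (s - t0)) (at_right t0)"
        proof -
          have "D < (D + L * E * n) / 2" using DL by (simp add: field_simps)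
          thus ?thesis using dl unfolding dini_le_def by blast
        qed
        show ?thesis
          using ev1 ev2 eventually_at_right_less[of t0]
        proof eventually_elim
          case (elim s)
          have "((D + L * E * n) / 2) * (s - t0) < (\<epsilon> * exp (L * (s - a)) * n - (\<epsilon> * exp (L * (t0 - a)) * n))"
            using elim by (simp add: pos_less_divide_eq)
          thus ?case using elim z0 unfolding z_def by simp
        qed
      qed
      have "eventually (\<lambda>s. \<forall>n\<in>{1..<N}. z n s \<le> 0) (at_right t0)"
        by (rule eventually_ball_finite) (use evn in auto)
      moreover have "eventually (\<lambda>s. s < b) (at_right t0)"
        using t0lt by (simp add: eventually_at_right_field) (metis)
      ultimately have "eventually (\<lambda>s. (\<forall>n\<in>{1..<N}. z n s \<le> 0) \<and> s < b) (at_right t0)"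
        by eventually_elim auto
      then obtain c where c: "c > t0" "\<And>s. t0 < s \<Longrightarrow> s < c \<Longrightarrow> (\<forall>n\<in>{1..<N}. z n s \<le> 0) \<and> s < b"
        unfolding eventually_at_right_field by blast
      define s1 where "s1 = (t0 + c) / 2"
      have s1: "t0 < s1" "s1 < c" using c(1) unfolding s1_def by auto
      have "s1 \<in> G"
      proof -
        have "s1 < b" using c(2)[OF s1] by simp
        moreover have "z n s \<le> 0" if "n \<ge> 1" "s \<in> {a..s1}" for n s
        proof (cases "n < N")
          case True
          show ?thesis
          proof (cases "s < t0")
            case True thus ?thesis using below \<open>n\<ge>1\<close> that(2) by auto
          next
            case False
            show ?thesis
            proof (cases "s = t0")
              case True thus ?thesis using at0 \<open>n\<ge>1\<close> by simp
            next
              case False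
              hence "t0 < s" "s < c" using \<open>\<not> s < t0\<close> that(2) s1 by auto
              thus ?thesis using c(2) \<open>n\<ge>1\<close> \<open>n<N\<close> by auto
            qed
          qed
        next
          case False
          thus ?thesis using big[of n s] that \<open>s1 < b\<close> by auto
        qed
        ultimately show ?thesis unfolding G_def using s1 t0a by auto
      qed
      hence "s1 \<le> t0" unfolding t0_def using bddG by (rule cSup_upper)
      thus False using s1 by simp
    qed
    hence "b \<in> G" using t0G by simp
    thus ?thesis unfolding G_def z_def by auto
  qed
  show ?thesis
  proof (intro allI impI ballI)
    fix n :: nat and t :: real assume n: "n \<ge> 1" and t: "t \<in> {a..b}"
    show "d n t \<le> 0"
    proof (rule field_le_epsilon)
      fix e :: real assume e: "e > 0"
      define C where "C = exp (L * (t - a)) * n"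
      have C: "C > 0" unfolding C_def using n by simp
      have "d n t \<le> (e / C) * exp (L * (t - a)) * n"
        using main[of "e / C"] e C n t by auto
      also have "\<dots> = e" using C n unfolding C_def by simp
      finally show "d n t \<le> 0 + e" by simp
    qed
  qed
qed



lemma dini_mono: "dini_le g t D \<Longrightarrow> D \<le> D' \<Longrightarrow> dini_le g t D'"
  unfolding dini_le_def by auto

lemma dini_add:
  assumes "dini_le g t D1" "dini_le h t D2"
  shows "dini_le (\<lambda>s. g s + h s) t (D1 + D2)"
  unfolding dini_le_def
proof (intro allI impI)
  fix r assume r: "r > D1 + D2"
  define e where "e = (r - D1 - D2) / 2"
  have e: "e > 0" using r unfolding e_def by simp
  have "eventually (\<lambda>s. g s \<le> g t + (D1 + e) * (s - t)) (at_right t)"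
    using assms(1) e unfolding dini_le_def by auto
  moreover have "eventually (\<lambda>s. h s \<le> h t + (D2 + e) * (s - t)) (at_right t)"
    using assms(2) e unfolding dini_le_def by auto
  ultimately show "eventually (\<lambda>s. g s + h s \<le> g t + h t + r * (s - t)) (at_right t)"
  proof eventually_elim
    case (elim s)
    have "r = (D1 + e) + (D2 + e)" unfolding e_def by simp
    hence "r * (s - t) = (D1 + e) * (s - t) + (D2 + e) * (s - t)" by (simp add: algebra_simps)
    thus ?case using elim by linarith
  qed
qed

lemma dini_deriv:
  assumes "(g has_real_derivative D) (at_right t)"
  shows "dini_le g t D"
  unfolding dini_le_def
proof (intro allI impI)
  fix r assume r: "r > D"
  have "((\<lambda>s. (g s - g t) / (s - t)) \<longlongrightarrow> D) (at_right t)"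
    using assms unfolding has_field_derivative_iff .
  hence "eventually (\<lambda>s. (g s - g t) / (s - t) < r) (at_right t)"
    using r order_tendstoD(2) by blast
  thus "eventually (\<lambda>s. g s \<le> g t + r * (s - t)) (at_right t)"
    using eventually_at_right_less[of t]
  proof eventually_elim
    case (elim s)
    thus ?case by (simp add: pos_divide_less_eq algebra_simps)
  qed
qed

lemma dini_deriv_within:
  assumes "(g has_real_derivative D) (at t within {x0..})" "x0 \<le> t"
  shows "dini_le g t D"
proof (rule dini_deriv)
  show "(g has_real_derivative D) (at_right t)"
    using assms(1) by (rule has_field_derivative_subset) (use assms(2) in auto)
qed

lemma dini_const: "D \<ge> 0 \<Longrightarrow> dini_le (\<lambda>s. c) t D"
  unfolding dini_le_def
  by (auto intro: eventually_mono[OF eventually_at_right_less])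

lemma dini_max:
  assumes "dini_le g t D1" "dini_le h t D2"
    and "(g \<longlongrightarrow> g t) (at_right t)" "(h \<longlongrightarrow> h t) (at_right t)"
    and "g t \<ge> h t \<Longrightarrow> D1 \<le> D" "h t \<ge> g t \<Longrightarrow> D2 \<le> D"
  shows "dini_le (\<lambda>s. max (g s) (h s)) t D"
proof (cases "g t > h t")
  case True
  have "eventually (\<lambda>s. (\<lambda>s. g s - h s) s > 0) (at_right t)"
    using order_tendstoD(1)[OF tendsto_diff[OF assms(3,4)], of 0] True by simp
  moreover have "dini_le g t D" using assms(1,5) True dini_mono by auto
  ultimately show ?thesis unfolding dini_le_def
    using True by (auto elim: eventually_elim2)
next
  case False
  note F = False
  show ?thesis
  proof (cases "h t > g t")
    case True
    have "eventually (\<lambda>s. (\<lambda>s. h s - g s) s > 0) (at_right t)"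
      using order_tendstoD(1)[OF tendsto_diff[OF assms(4,3)], of 0] True by simp
    moreover have "dini_le h t D" using assms(2,6) True dini_mono by auto
    ultimately show ?thesis unfolding dini_le_def
      using True by (auto elim: eventually_elim2)
  next
    case False
    hence eq: "g t = h t" using F by simp
    have "dini_le g t D" "dini_le h t D" using assms(1,2,5,6) eq dini_mono by auto
    thus ?thesis unfolding dini_le_def using eq
      by (auto simp: eventually_conj_iff)
  qed
qed

locale sir =
  fixes k :: nat and s0 tau eta lam i0 :: real
  assumes k2: "k \<ge> 2" and s0p: "s0 > 0" and taup: "tau > 0" and etap: "eta > 0"
    and lamp: "lam > 0" and i0p: "i0 > 0"
begin

abbreviation f where "f \<equiv> sir_f s0 tau eta"

definition F :: "(nat \<Rightarrow> real) \<Rightarrow> nat \<Rightarrow> real" where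
  "F x n = (if n = 1 then f (x 1) + i0 + lam * (real k + 1) * (x 2 - x 1)
            else f (x n) + lam * (x (n - 1) - (real k + 1) * x n + real k * x (n + 1)))"

lemma f0: "f 0 = 0" by (simp add: sir_f_def)

lemma f_lip:
  assumes "y \<le> x"
  shows "f x - f y \<le> s0 * tau * exp (- tau * y) * (x - y)"
proof -
  have "exp (- tau * x) = exp (- tau * y) * exp (- (tau * (x - y)))"
    by (simp add: exp_add[symmetric] algebra_simps)
  also have "\<dots> \<ge> exp (- tau * y) * (1 - tau * (x - y))"
    using exp_ge_add_one_self[of "- (tau * (x - y))"] by (intro mult_left_mono) auto
  finally have "exp (- tau * y) - exp (- tau * x) \<le> tau * exp (- tau * y) * (x - y)"
    by (simp add: algebra_simps)
  hence "s0 * (exp (- tau * y) - exp (- tau * x)) \<le> s0 * (tau * exp (- tau * y) * (x - y))"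
    using s0p by (intro mult_left_mono) auto
  moreover have "eta * (x - y) \<ge> 0" using etap assms by simp
  ultimately show ?thesis unfolding sir_f_def by (simp add: algebra_simps)
qed

lemma f_lip0:
  assumes "y \<le> x" "0 \<le> y"
  shows "f x - f y \<le> s0 * tau * (x - y)"
proof -
  have "exp (- tau * y) \<le> 1" using assms taup by simp
  hence "s0 * tau * exp (- tau * y) * (x - y) \<le> s0 * tau * 1 * (x - y)"
    using assms s0p taup by (intro mult_right_mono mult_left_mono) auto
  thus ?thesis using f_lip[OF assms(1)] by simp
qed

lemma f_le_lin: "f x \<le> (s0 * tau - eta) * x"
proof -
  have "1 - exp (- tau * x) \<le> tau * x" using exp_ge_add_one_self[of "- tau * x"] by simp
  hence "s0 * (1 - exp (- tau * x)) \<le> s0 * (tau * x)" using s0p by (intro mult_left_mono) auto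
  thus ?thesis unfolding sir_f_def by (simp add: algebra_simps)
qed

lemma f_ge_neg: "u \<ge> 0 \<Longrightarrow> f u \<ge> - eta * u"
  unfolding sir_f_def using s0p taup by (simp add: mult_nonneg_nonneg)

lemma f_ge_small:
  assumes "0 \<le> u"
  shows "f u \<ge> (s0 * tau - eta) * u - s0 * tau^2 * u^2"
proof -
  define x where "x = tau * u"
  have x0: "x \<ge> 0" using assms taup unfolding x_def by simp
  have "exp x \<ge> 1 + x" by simp
  hence "exp (- x) \<le> 1 / (1 + x)" using x0
    by (simp add: exp_minus field_simps)
  hence "1 - exp (- x) \<ge> 1 - 1 / (1 + x)" by simp
  moreover have "1 - 1 / (1 + x) \<ge> x - x^2"
  proof -
    have "1 - 1 / (1 + x) = x / (1 + x)" using x0 by (simp add: field_simps)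
    moreover have "x / (1 + x) \<ge> x - x^2" using x0
      by (simp add: field_simps power2_eq_square mult_nonneg_nonneg)
    ultimately show ?thesis by simp
  qed
  ultimately have "1 - exp (- x) \<ge> x - x^2" by simp
  hence "s0 * (1 - exp (- x)) \<ge> s0 * (x - x^2)" using s0p by (intro mult_left_mono) auto
  thus ?thesis unfolding sir_f_def x_def by (simp add: algebra_simps power2_eq_square)
qed

lemma cmp_sys:
  fixes u v :: "nat \<Rightarrow> real \<Rightarrow> real"
  assumes ab: "a \<le> b"
    and contu: "\<And>n. n \<ge> 1 \<Longrightarrow> continuous_on {a..b} (u n)"
    and contv: "\<And>n. n \<ge> 1 \<Longrightarrow> continuous_on {a..b} (v n)"
    and bdd: "\<And>n t. n \<ge> 1 \<Longrightarrow> t \<in> {a..b} \<Longrightarrow> u n t - v n t \<le> B"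
    and init: "\<And>n. n \<ge> 1 \<Longrightarrow> u n a \<le> v n a"
    and lip: "\<And>n t. n \<ge> 1 \<Longrightarrow> a \<le> t \<Longrightarrow> t < b \<Longrightarrow> u n t > v n t \<Longrightarrow>
                f (u n t) - f (v n t) \<le> Kf * (u n t - v n t)"
    and subs: "\<And>n t. n \<ge> 1 \<Longrightarrow> a \<le> t \<Longrightarrow> t < b \<Longrightarrow> u n t > v n t \<Longrightarrow>
                dini_le (u n) t (F (\<lambda>j. u j t) n)"
    and sups: "\<And>n t. n \<ge> 1 \<Longrightarrow> a \<le> t \<Longrightarrow> t < b \<Longrightarrow> u n t > v n t \<Longrightarrow>
                dini_le (\<lambda>s. - v n s) t (- F (\<lambda>j. v j t) n)"
  shows "\<forall>n\<ge>1. \<forall>t\<in>{a..b}. u n t \<le> v n t"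
proof -
  define d where "d n t = u n t - v n t" for n t
  define p :: "nat \<Rightarrow> real" where "p n = lam" for n
  define q :: "nat \<Rightarrow> real" where "q n = (if n = 1 then lam * (real k + 1) else lam * real k)" for n
  have "\<forall>n\<ge>1. \<forall>t\<in>{a..b}. d n t \<le> 0"
  proof (rule comparison[where B=B and P=lam and Q="lam * (real k + 1)" and p=p and q=q
          and K="Kf - lam * (real k + 1)"])
    show "a \<le> b" by fact
    show "continuous_on {a..b} (d n)" if "n \<ge> 1" for n
      unfolding d_def using contu[OF that] contv[OF that] by (intro continuous_intros)
    show "d n t \<le> B" if "n \<ge> 1" "t \<in> {a..b}" for n t using bdd that unfolding d_def by auto
    show "d n a \<le> 0" if "n \<ge> 1" for n using init that unfolding d_def by auto
    show "0 \<le> p n" "p n \<le> lam" for n unfolding p_def using lamp by auto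
    show "0 \<le> q n" "q n \<le> lam * (real k + 1)" for n unfolding q_def using lamp by auto
    fix n t assume n: "n \<ge> 1" and t: "a \<le> t" "t < b" and dp: "d n t > 0"
    hence uv: "u n t > v n t" unfolding d_def by simp
    have "dini_le (\<lambda>s. u n s + - v n s) t (F (\<lambda>j. u j t) n + - F (\<lambda>j. v j t) n)"
      by (rule dini_add[OF subs[OF n t uv] sups[OF n t uv]])
    hence dl: "dini_le (d n) t (F (\<lambda>j. u j t) n - F (\<lambda>j. v j t) n)"
      unfolding d_def by simp
    have L: "f (u n t) - f (v n t) \<le> Kf * d n t" using lip[OF n t uv] unfolding d_def .
    show "dini_le (d n) t ((Kf - lam * (real k + 1)) * d n t + (if n \<ge> 2 then p n * d (n-1) t else 0)
            + q n * d (n+1) t)"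
    proof (rule dini_mono[OF dl])
      show "F (\<lambda>j. u j t) n - F (\<lambda>j. v j t) n \<le> (Kf - lam * (real k + 1)) * d n t
              + (if n \<ge> 2 then p n * d (n-1) t else 0) + q n * d (n+1) t"
      proof (cases "n = 1")
        case True
        thus ?thesis using L unfolding F_def p_def q_def d_def by (simp add: algebra_simps numeral_2_eq_2)
      next
        case False
        hence "n \<ge> 2" using n by simp
        thus ?thesis using L False unfolding F_def p_def q_def d_def by (simp add: algebra_simps)
      qed
    qed
  qed
  thus ?thesis unfolding d_def by auto
qed

end

lemma pow_fact_le_exp:
  fixes x :: real assumes "x \<ge> 0"
  shows "x ^ n / fact n \<le> exp x"
proof -
  have s: "(\<lambda>j. x ^ j / fact j) sums exp x"
    using exp_converges[of x] by (simp add: divide_inverse mult.commute scaleR_conv_of_real)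
  have "sum (\<lambda>j. x ^ j / fact j) {n} \<le> suminf (\<lambda>j. x ^ j / fact j)"
    by (rule sum_le_suminf) (use s assms in \<open>auto simp: sums_summable\<close>)
  thus ?thesis using sums_unique[OF s] by simp
qed

locale sirI = sir +
  fixes I :: "nat \<Rightarrow> real \<Rightarrow> real" and Iinf :: "nat \<Rightarrow> real"
  assumes apos: "s0 * tau - eta > 0"
    and lamc: "lam * (real k + 1 - 2 * sqrt (real k)) < s0 * tau - eta"
    and Iinf_pos: "\<And>n. n \<ge> 1 \<Longrightarrow> Iinf n > 0"
    and Iinf_bdd: "\<exists>B. \<forall>n\<ge>1. \<bar>Iinf n\<bar> \<le> B"
    and Iinf_eq: "\<And>n. n \<ge> 2 \<Longrightarrow>
        0 = sir_f s0 tau eta (Iinf n)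
            + lam * (Iinf (n - 1) - (real k + 1) * Iinf n + real k * Iinf (n + 1))"
    and Iinf_eq1: "0 = sir_f s0 tau eta (Iinf 1) + i0
            + lam * (real k + 1) * (- Iinf 1 + Iinf 2)"
    and I_bdd: "\<And>T. \<exists>B. \<forall>n\<ge>1. \<forall>t\<in>{0..T}. \<bar>I n t\<bar> \<le> B"
    and I_ode: "\<And>n t. n \<ge> 2 \<Longrightarrow> t \<ge> 0 \<Longrightarrow>
        ((I n) has_real_derivative
          (sir_f s0 tau eta (I n t)
           + lam * (I (n - 1) t - (real k + 1) * I n t + real k * I (n + 1) t)))
        (at t within {0..})"
    and I_ode1: "\<And>t. t \<ge> 0 \<Longrightarrow>
        ((I 1) has_real_derivative
          (sir_f s0 tau eta (I 1 t) + i0 + lam * (real k + 1) * (- I 1 t + I 2 t)))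
        (at t within {0..})"
    and I_init: "\<And>n. n \<ge> 1 \<Longrightarrow> I n 0 = 0"
begin

lemma I_der: "n \<ge> 1 \<Longrightarrow> t \<ge> 0 \<Longrightarrow> (I n has_real_derivative F (\<lambda>j. I j t) n) (at t within {0..})"
proof (cases "n = 1")
  case True
  assume "t \<ge> 0"
  thus ?thesis using I_ode1[of t] True unfolding F_def by (simp add: algebra_simps)
next
  case False
  assume "n \<ge> 1" "t \<ge> 0"
  thus ?thesis using I_ode[of n t] False unfolding F_def by simp
qed

lemma I_cont: "n \<ge> 1 \<Longrightarrow> 0 \<le> a \<Longrightarrow> continuous_on {a..b} (I n)"
proof -
  assume n: "n \<ge> 1" and a: "0 \<le> a"
  have "continuous_on {0..} (I n)"
    by (rule DERIV_continuous_on[OF I_der[OF n]]) auto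
  thus ?thesis by (rule continuous_on_subset) (use a in auto)
qed

lemma Iinf_F: "n \<ge> 1 \<Longrightarrow> F Iinf n = 0"
  using Iinf_eq[of n] Iinf_eq1 unfolding F_def by (auto simp: algebra_simps)

lemma dini_I: "n \<ge> 1 \<Longrightarrow> t \<ge> 0 \<Longrightarrow> dini_le (I n) t (F (\<lambda>j. I j t) n)"
  by (rule dini_deriv_within[OF I_der]) auto

lemma dini_negI: "n \<ge> 1 \<Longrightarrow> t \<ge> 0 \<Longrightarrow> dini_le (\<lambda>s. - I n s) t (- F (\<lambda>j. I j t) n)"
  by (rule dini_deriv_within[OF DERIV_minus[OF I_der]]) auto

lemma I_nonneg: assumes "n \<ge> 1" "t \<ge> 0" shows "I n t \<ge> 0"
proof -
  obtain B where B: "\<forall>n\<ge>1. \<forall>s\<in>{0..t}. \<bar>I n s\<bar> \<le> B" using I_bdd by blast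
  have "\<forall>n\<ge>1. \<forall>s\<in>{0..t}. (\<lambda>n s. 0) n s \<le> I n s"
  proof (rule cmp_sys[where B=B and Kf="s0 * tau * exp (tau * B)" and u="\<lambda>n s. 0" and v=I])
    show "0 \<le> t" by fact
    show "continuous_on {0..t} (\<lambda>s. 0::real)" for n :: nat by simp
    show "continuous_on {0..t} (I n)" if "n \<ge> 1" for n using I_cont that by simp
    show "0 - I n s \<le> B" if "n \<ge> 1" "s \<in> {0..t}" for n s using B that by force
    show "(0::real) \<le> I n 0" if "n \<ge> 1" for n using I_init that by simp
    show "f 0 - f (I n s) \<le> s0 * tau * exp (tau * B) * (0 - I n s)"
      if "n \<ge> 1" "0 \<le> s" "s < t" "I n s < 0" for n s
    proof -
      have "s \<in> {0..t}" using that by auto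
      hence "\<bar>I n s\<bar> \<le> B" using B that(1) by blast
      hence "- I n s \<le> B" by linarith
      hence "tau * (- I n s) \<le> tau * B" using taup by (intro mult_left_mono) auto
      hence "exp (- tau * I n s) \<le> exp (tau * B)" by simp
      hence "s0 * tau * exp (- tau * I n s) * (0 - I n s) \<le> s0 * tau * exp (tau * B) * (0 - I n s)"
        using that s0p taup by (intro mult_right_mono mult_left_mono) auto
      thus ?thesis using f_lip[of "I n s" 0] that by simp
    qed
    show "dini_le (\<lambda>s. 0) s (F (\<lambda>j. 0) n)" for n s
      by (rule dini_const) (simp add: F_def f0 i0p less_imp_le)
    show "dini_le (\<lambda>s. - I n s) s (- F (\<lambda>j. I j s) n)"
      if "n \<ge> 1" "0 \<le> s" for n s using dini_negI that by simp
  qed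
  thus ?thesis using assms by auto
qed

lemma I_le_Iinf: assumes "n \<ge> 1" "t \<ge> 0" shows "I n t \<le> Iinf n"
proof -
  obtain B where B: "\<forall>n\<ge>1. \<forall>s\<in>{0..t}. \<bar>I n s\<bar> \<le> B" using I_bdd by blast
  have "\<forall>n\<ge>1. \<forall>s\<in>{0..t}. I n s \<le> (\<lambda>n s. Iinf n) n s"
  proof (rule cmp_sys[where B=B and Kf="s0 * tau" and u=I and v="\<lambda>n s. Iinf n"])
    show "0 \<le> t" by fact
    show "continuous_on {0..t} (\<lambda>s. Iinf n)" for n by simp
    show "continuous_on {0..t} (I n)" if "n \<ge> 1" for n using I_cont that by simp
    show "I n s - Iinf n \<le> B" if "n \<ge> 1" "s \<in> {0..t}" for n s
      using B that Iinf_pos[OF that(1)] by force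
    show "I n 0 \<le> Iinf n" if "n \<ge> 1" for n using I_init[OF that] Iinf_pos[OF that] by simp
    show "f (I n s) - f (Iinf n) \<le> s0 * tau * (I n s - Iinf n)"
      if "n \<ge> 1" "0 \<le> s" "s < t" "Iinf n < I n s" for n s
      using f_lip0[of "Iinf n" "I n s"] that Iinf_pos[OF that(1)] by simp
    show "dini_le (I n) s (F (\<lambda>j. I j s) n)" if "n \<ge> 1" "0 \<le> s" for n s
      using dini_I that by simp
    show "dini_le (\<lambda>s. - Iinf n) s (- F (\<lambda>j. Iinf j) n)" if "n \<ge> 1" for n s
      by (rule dini_const) (simp add: Iinf_F[OF that])
  qed
  thus ?thesis using assms by auto
qed

definition G :: "real \<Rightarrow> real" where
  "G g = (s0 * tau - eta) + lam * (exp g - (real k + 1) + real k * exp (- g))"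

lemma amgm: "exp g + real k * exp (- g) \<ge> 2 * sqrt (real k)"
proof -
  define X where "X = exp (g / 2)"
  define Y where "Y = exp (- g / 2)"
  have XY: "X * Y = 1" unfolding X_def Y_def by (simp add: exp_add[symmetric])
  have X2: "X * X = exp g" unfolding X_def by (simp add: exp_add[symmetric])
  have Y2: "Y * Y = exp (- g)" unfolding Y_def by (simp add: exp_add[symmetric])
  have sk: "sqrt (real k) * sqrt (real k) = real k" by simp
  have "0 \<le> (X - sqrt (real k) * Y) * (X - sqrt (real k) * Y)" by simp
  also have "\<dots> = X * X - 2 * sqrt (real k) * (X * Y) + (sqrt (real k) * sqrt (real k)) * (Y * Y)"
    by (simp add: algebra_simps)
  finally show ?thesis using XY X2 Y2 sk by simp
qed

lemma G_lower: "G g \<ge> (s0 * tau - eta) - lam * (real k + 1 - 2 * sqrt (real k))"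
proof -
  have "lam * (exp g + real k * exp (- g)) \<ge> lam * (2 * sqrt (real k))"
    using amgm lamp by (intro mult_left_mono) auto
  thus ?thesis unfolding G_def by (simp add: algebra_simps)
qed

definition delta0 where "delta0 = (s0 * tau - eta) - lam * (real k + 1 - 2 * sqrt (real k))"

lemma delta0_pos: "delta0 > 0" using lamc unfolding delta0_def by simp

lemma G_pos: "G g > 0" using G_lower[of g] delta0_pos unfolding delta0_def by simp

lemma I_le_exp:
  assumes g: "g > 0" and n: "n \<ge> 1" and t: "t \<ge> 0"
  shows "I n t \<le> i0 * exp g / (lam * (exp g - exp (- g))) * exp (- g * (real n - G g / g * t))"
proof -
  define A where "A = i0 * exp g / (lam * (exp g - exp (- g)))"
  define c where "c = G g / g"
  define w where "w n s = A * exp (- g * (real n - c * s))" for n s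
  have ed: "exp g - exp (- g) > 0" using g by simp
  have Apos: "A > 0" unfolding A_def using ed i0p lamp by simp
  have cpos: "c > 0" unfolding c_def using G_pos g by simp
  have wpos: "w n s > 0" for n s unfolding w_def using Apos by simp
  have wm1: "w (n - 1) s = exp g * w n s" if "n \<ge> 1" for n s
    using that unfolding w_def by (simp add: of_nat_diff exp_add[symmetric] algebra_simps)
  have wp1: "w (n + 1) s = exp (- g) * w n s" for n s
    unfolding w_def by (simp add: exp_add[symmetric] algebra_simps)
  have wder: "((\<lambda>s. - w n s) has_real_derivative (- (G g * w n s))) (at s)" for n s
    unfolding w_def c_def using g by (auto intro!: derivative_eq_intros simp: field_simps)
  obtain B where B: "\<forall>n\<ge>1. \<forall>s\<in>{0..t}. \<bar>I n s\<bar> \<le> B" using I_bdd by blast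
  have "\<forall>n\<ge>1. \<forall>s\<in>{0..t}. I n s \<le> w n s"
  proof (rule cmp_sys[where B=B and Kf="s0 * tau" and u=I and v=w])
    show "0 \<le> t" by fact
    show "continuous_on {0..t} (w n)" for n unfolding w_def by (intro continuous_intros)
    show "continuous_on {0..t} (I n)" if "n \<ge> 1" for n using I_cont that by simp
    show "I n s - w n s \<le> B" if "n \<ge> 1" "s \<in> {0..t}" for n s
      using B that wpos[of n s] by force
    show "I n 0 \<le> w n 0" if "n \<ge> 1" for n using I_init that wpos[of n 0] by simp
    show "f (I n s) - f (w n s) \<le> s0 * tau * (I n s - w n s)"
      if "n \<ge> 1" "0 \<le> s" "s < t" "w n s < I n s" for n s
      using f_lip0[of "w n s" "I n s"] that wpos[of n s] by simp
    show "dini_le (I n) s (F (\<lambda>j. I j s) n)" if "n \<ge> 1" "0 \<le> s" for n s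
      using dini_I that by simp
    show "dini_le (\<lambda>s. - w n s) s (- F (\<lambda>j. w j s) n)" if n1: "n \<ge> 1" and s0: "0 \<le> s" for n s
    proof (rule dini_mono[OF dini_deriv[OF has_field_derivative_at_within[OF wder]]])
      have fw: "f (w n s) \<le> (s0 * tau - eta) * w n s" by (rule f_le_lin)
      show "- (G g * w n s) \<le> - F (\<lambda>j. w j s) n"
      proof (cases "n = 1")
        case True
        have "w 1 s = A * exp (- g) * exp (g * c * s)"
          unfolding w_def by (simp add: exp_add[symmetric] algebra_simps)
        moreover have "exp (g * c * s) \<ge> 1" using g cpos s0 by simp
        ultimately have "w 1 s \<ge> A * exp (- g) * 1" using Apos
          by (metis mult_left_mono exp_gt_zero less_imp_le mult_pos_pos)
        hence "lam * (exp g - exp (- g)) * w 1 s \<ge> lam * (exp g - exp (- g)) * (A * exp (- g))"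
          using lamp ed by (intro mult_left_mono) auto
        also have "lam * (exp g - exp (- g)) * (A * exp (- g)) = i0"
          unfolding A_def using lamp ed by (simp add: field_simps exp_minus)
        finally have key: "i0 \<le> lam * (exp g - exp (- g)) * w 1 s" .
        have w2: "w 2 s = exp (- g) * w 1 s" using wp1[of 1 s] by (simp add: numeral_2_eq_2)
        show ?thesis using True fw key w2 unfolding F_def G_def
          by (simp add: algebra_simps)
      next
        case False
        have "F (\<lambda>j. w j s) n = f (w n s) + lam * (exp g * w n s - (real k + 1) * w n s + real k * (exp (- g) * w n s))"
          using False wm1[OF n1] wp1 unfolding F_def by simp
        thus ?thesis using fw unfolding G_def by (simp add: algebra_simps)
      qed
    qed
  qed
  thus ?thesis using assms unfolding w_def A_def c_def by auto
qed

definition bb where "bb = eta + lam * (real k + 1)"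

lemma bb_pos: "bb > 0" unfolding bb_def using etap lamp by (simp add: add_pos_nonneg)

lemma exp_bb_le: "x \<ge> 0 \<Longrightarrow> exp (- bb * x) \<le> 1"
  using bb_pos by (simp add: mult_nonneg_nonneg)

definition Wp :: "nat \<Rightarrow> real \<Rightarrow> real" where
  "Wp n x = i0 * lam ^ (n - 1) * x ^ n * exp (- bb * x) / fact n"

lemma Wp_nonneg: "x \<ge> 0 \<Longrightarrow> Wp n x \<ge> 0"
  unfolding Wp_def using i0p lamp by simp

lemma Wp_der:
  assumes "n \<ge> 1"
  shows "(Wp n has_real_derivative
           (if n = 1 then i0 * exp (- bb * x) - bb * Wp 1 x else lam * Wp (n - 1) x - bb * Wp n x)) (at x)"
proof -
  have d: "(Wp n has_real_derivative
      i0 * lam ^ (n - 1) * (real n * x ^ (n - 1) * exp (- bb * x) + x ^ n * (exp (- bb * x) * (- bb))) / fact n) (at x)"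
    unfolding Wp_def apply (auto intro!: derivative_eq_intros)
    by (simp add: algebra_simps)
  show ?thesis
  proof (cases "n = 1")
    case True
    show ?thesis using d unfolding True Wp_def by (simp add: algebra_simps)
  next
    case False
    then obtain m where m: "n = Suc (Suc m)" using assms by (metis Suc_le_D Suc_le_lessD less_Suc_eq_le not_less_eq_eq Suc_pred One_nat_def le_antisym)
    have eq: "i0 * lam ^ (n - 1) * (real n * x ^ (n - 1) * exp (- bb * x) + x ^ n * (exp (- bb * x) * (- bb))) / fact n
          = lam * Wp (n - 1) x - bb * Wp n x"
      unfolding Wp_def m by (simp add: field_simps fact_Suc del: of_nat_Suc)
    show ?thesis using False d[unfolded eq] by simp
  qed
qed

lemma Wp_sub:
  assumes "n \<ge> 1" "x \<ge> 0"
  shows "(if n = 1 then i0 * exp (- bb * x) - bb * Wp 1 x else lam * Wp (n - 1) x - bb * Wp n x)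
         \<le> F (\<lambda>j. Wp j x) n"
proof (cases "n = 1")
  case True
  have "exp (- bb * x) \<le> 1" using assms exp_bb_le by simp
  hence "i0 * exp (- bb * x) \<le> i0" using i0p by simp
  moreover have "f (Wp 1 x) \<ge> - eta * Wp 1 x" using f_ge_neg Wp_nonneg assms by blast
  moreover have "Wp 2 x \<ge> 0" using Wp_nonneg assms by blast
  ultimately show ?thesis using True lamp unfolding F_def bb_def
    by (simp add: algebra_simps) (smt (verit, best) mult_nonneg_nonneg of_nat_0_le_iff)
next
  case False
  have "f (Wp n x) \<ge> - eta * Wp n x" using f_ge_neg Wp_nonneg assms by blast
  moreover have "Wp (n + 1) x \<ge> 0" using Wp_nonneg assms by blast
  moreover have "lam * (real k * Wp (n + 1) x) \<ge> 0" using calculation(2) lamp by simp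
  ultimately show ?thesis using False unfolding F_def bb_def by (simp add: algebra_simps)
qed

lemma I_lower_poly:
  assumes n: "n \<ge> 1" and s: "s \<ge> 0"
  shows "I n (s + 1) \<ge> Wp n 1"
proof -
  obtain B where B: "\<forall>n\<ge>1. \<forall>t\<in>{0..s+1}. \<bar>I n t\<bar> \<le> B" using I_bdd by blast
  have Wpb: "Wp n x \<le> i0 / lam * exp lam" if "0 \<le> x" "x \<le> 1" "n \<ge> 1" for n x
  proof -
    have "Wp n x = i0 / lam * ((lam * x) ^ n / fact n) * exp (- bb * x)"
      unfolding Wp_def using that lamp
      by (simp add: power_mult_distrib field_simps power_eq_if[of lam n])
    also have "\<dots> \<le> i0 / lam * exp (lam * x) * 1"
    proof (rule mult_mono)
      show "exp (- bb * x) \<le> 1" using exp_bb_le[OF that(1)] .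
      show "i0 / lam * ((lam * x) ^ n / fact n) \<le> i0 / lam * exp (lam * x)"
        using that lamp i0p pow_fact_le_exp[of "lam * x" n] by (intro mult_left_mono) auto
    qed (use that lamp i0p in auto)
    also have "\<dots> \<le> i0 / lam * exp lam"
    proof -
      have "lam * x \<le> lam * 1" using that lamp by (intro mult_left_mono) auto
      hence "exp (lam * x) \<le> exp lam" by simp
      thus ?thesis using lamp i0p by (simp add: divide_right_mono)
    qed
    finally show ?thesis .
  qed
  have "\<forall>n\<ge>1. \<forall>t\<in>{s..s+1}. (\<lambda>n t. Wp n (t - s)) n t \<le> I n t"
  proof (rule cmp_sys[where B="i0 / lam * exp lam" and Kf="s0 * tau" and u="\<lambda>n t. Wp n (t - s)" and v=I])
    show "s \<le> s + 1" by simp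
    show "continuous_on {s..s+1} (\<lambda>t. Wp n (t - s))" for n
      unfolding Wp_def by (intro continuous_intros) auto
    show "continuous_on {s..s+1} (I n)" if "n \<ge> 1" for n using I_cont that s by simp
    show "Wp n (t - s) - I n t \<le> i0 / lam * exp lam" if "n \<ge> 1" "t \<in> {s..s+1}" for n t
      using Wpb[of "t - s" n] I_nonneg[of n t] that s by auto
    show "Wp n (s - s) \<le> I n s" if "n \<ge> 1" for n
      using I_nonneg[OF that s] that unfolding Wp_def by (simp add: power_0_left)
    show "f (Wp n (t - s)) - f (I n t) \<le> s0 * tau * (Wp n (t - s) - I n t)"
      if "n \<ge> 1" "s \<le> t" "t < s + 1" "I n t < Wp n (t - s)" for n t
      using f_lip0[of "I n t" "Wp n (t - s)"] that I_nonneg[of n t] s by simp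
    show "dini_le (\<lambda>s. - I n s) t (- F (\<lambda>j. I j t) n)" if "n \<ge> 1" "s \<le> t" for n t
      using dini_negI that s by simp
    show "dini_le (\<lambda>t. Wp n (t - s)) t (F (\<lambda>j. Wp j (t - s)) n)" if n1: "n \<ge> 1" and st: "s \<le> t" for n t
    proof (rule dini_mono[OF dini_deriv])
      have "((\<lambda>t. Wp n (t - s)) has_real_derivative
           (if n = 1 then i0 * exp (- bb * (t - s)) - bb * Wp 1 (t - s) else lam * Wp (n - 1) (t - s) - bb * Wp n (t - s)))
           (at t)"
      proof -
        have dd: "((\<lambda>t. t - s) has_real_derivative 1) (at t)" by (auto intro!: derivative_eq_intros)
        show ?thesis using DERIV_chain2[OF Wp_der[OF n1] dd] by simp
      qed
      thus "((\<lambda>t. Wp n (t - s)) has_real_derivative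
           (if n = 1 then i0 * exp (- bb * (t - s)) - bb * Wp 1 (t - s) else lam * Wp (n - 1) (t - s) - bb * Wp n (t - s)))
           (at_right t)"
        by (rule has_field_derivative_at_within)
      show "(if n = 1 then i0 * exp (- bb * (t - s)) - bb * Wp 1 (t - s) else lam * Wp (n - 1) (t - s) - bb * Wp n (t - s))
            \<le> F (\<lambda>j. Wp j (t - s)) n"
        using Wp_sub[OF n1, of "t - s"] st by simp
    qed
  qed
  moreover have "s + 1 \<in> {s..s+1}" by simp
  ultimately have "Wp n ((s + 1) - s) \<le> I n (s + 1)" using n by blast
  thus ?thesis by simp
qed

lemma Wp1_pos: "n \<ge> 1 \<Longrightarrow> Wp n 1 > 0"
  unfolding Wp_def using i0p lamp by simp

end

context sirI begin

definition cs where "cs = (INF g\<in>{0<..}. G g / g)"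

lemma cstar_eq: "cstar k s0 tau eta lam = cs"
proof -
  have "eta * (R0 s0 tau eta - 1) = s0 * tau - eta" unfolding R0_def using etap by (simp add: field_simps)
  thus ?thesis unfolding cstar_def cs_def G_def by simp
qed

lemma exp_quad: "(g::real) \<ge> 0 \<Longrightarrow> exp g \<ge> 1 + g + g^2 / 4"
proof -
  assume g: "g \<ge> 0"
  have "exp g = exp (g/2) * exp (g/2)" by (simp add: exp_add[symmetric])
  also have "\<dots> \<ge> (1 + g/2) * (1 + g/2)"
    using exp_ge_add_one_self[of "g/2"] g by (intro mult_mono) auto
  finally show ?thesis by (simp add: algebra_simps power2_eq_square)
qed

definition m0 where "m0 = min lam (delta0 / (2 * real k))"

lemma m0_pos: "m0 > 0" unfolding m0_def using lamp delta0_pos k2 by simp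

lemma Gg_lower: assumes g: "g > 0" shows "G g / g \<ge> m0"
proof (cases "g \<le> 2 * real k")
  case True
  have "delta0 / (2 * real k) \<le> delta0 / g"
    using True g delta0_pos by (intro divide_left_mono) auto
  also have "\<dots> \<le> G g / g" using G_lower[of g] g unfolding delta0_def by (intro divide_right_mono) auto
  finally show ?thesis unfolding m0_def by simp
next
  case False
  have kk: "real k \<ge> 2" using k2 by simp
  have "g^2 / 4 \<ge> real k"
  proof -
    have "g * g \<ge> (2 * real k) * (2 * real k)" using False kk by (intro mult_mono) auto
    moreover have "(2 * real k) * (2 * real k) \<ge> 4 * real k" using kk by (simp add: mult_right_mono)
    ultimately show ?thesis by (simp add: power2_eq_square)
  qed
  hence "exp g - (real k + 1) \<ge> g" using exp_quad[of g] g by simp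
  moreover have "real k * exp (- g) \<ge> 0" by simp
  ultimately have "exp g - (real k + 1) + real k * exp (- g) \<ge> g" by linarith
  hence "lam * (exp g - (real k + 1) + real k * exp (- g)) \<ge> lam * g"
    using lamp by (intro mult_left_mono) auto
  hence "G g \<ge> lam * g" using apos unfolding G_def by simp
  hence "G g / g \<ge> lam" using g by (simp add: pos_le_divide_eq)
  thus ?thesis unfolding m0_def by simp
qed

lemma bdd_G: "bdd_below ((\<lambda>g. G g / g) ` {0<..})"
  using Gg_lower by (auto intro!: bdd_belowI2)

lemma cs_pos: "cs > 0"
proof -
  have "cs \<ge> m0" unfolding cs_def by (rule cINF_greatest) (use Gg_lower in auto)
  thus ?thesis using m0_pos by simp
qed

lemma cs_le: "g > 0 \<Longrightarrow> cs \<le> G g / g"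
  unfolding cs_def by (rule cINF_lower[OF bdd_G]) auto

lemma cs_above: "c > cs \<Longrightarrow> \<exists>g>0. G g / g < c"
  unfolding cs_def using cINF_less_iff[OF _ bdd_G] by auto

end

context sirI begin

definition aa where "aa = s0 * tau - eta"

definition XX :: "real \<Rightarrow> real" where "XX y = (y + sqrt (y^2 + 4 * real k)) / 2"

lemma XX_props:
  shows "XX y > 0" and "XX y - real k / XX y = y" and "y \<ge> 0 \<Longrightarrow> XX y \<ge> y"
    and "y \<ge> 0 \<Longrightarrow> XX y > 1"
proof -
  have kk: "real k \<ge> 2" using k2 by simp
  have s1: "sqrt (y^2 + 4 * real k) > \<bar>y\<bar>"
    using kk by (intro real_less_rsqrt) (simp add: power2_eq_square)
  show pos: "XX y > 0" unfolding XX_def using s1 by simp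
  have sq: "sqrt (y^2 + 4 * real k) ^ 2 = y^2 + 4 * real k" using kk by (intro real_sqrt_pow2) (simp add: add_nonneg_nonneg)
  have "XX y * XX y - real k = y * XX y"
    unfolding XX_def using sq by (simp add: field_simps power2_eq_square)
  thus "XX y - real k / XX y = y" using pos by (simp add: field_simps)
  show "y \<ge> 0 \<Longrightarrow> XX y \<ge> y" unfolding XX_def using s1 by simp
  show "y \<ge> 0 \<Longrightarrow> XX y > 1"
  proof -
    assume y: "y \<ge> 0"
    have "(2::real)^2 < y^2 + 4 * real k"
    proof -
      have "(2::real)^2 = 4" by simp
      moreover have "y^2 \<ge> 0" by simp
      ultimately show ?thesis using kk by linarith
    qed
    hence "2 < sqrt (y^2 + 4 * real k)" by (rule real_less_rsqrt)
    thus ?thesis unfolding XX_def using y by (simp add: field_simps)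
  qed
qed

lemma sinx_over_x: "((\<lambda>x::real. sin x / x) \<longlongrightarrow> 1) (at_right 0)"
proof -
  have "((\<lambda>x. (sin x - sin 0) / (x - 0)) \<longlongrightarrow> cos 0) (at (0::real))"
    using DERIV_sin[of 0] unfolding has_field_derivative_iff by simp
  hence "((\<lambda>x::real. sin x / x) \<longlongrightarrow> 1) (at 0)" by simp
  thus ?thesis by (rule filterlim_mono) (auto simp: at_le)
qed

lemma root_exists:
  assumes cc: "0 < cc" "cc < cs"
  shows "\<exists>\<delta>>0. \<exists>g>0. \<exists>\<beta>. 0 < \<beta> \<and> \<beta> < pi \<and>
           lam * sin \<beta> * (exp g - real k * exp (- g)) = cc * \<beta> \<and>
           (aa - \<delta>) + lam * ((exp g + real k * exp (- g)) * cos \<beta> - (real k + 1)) = cc * g"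
proof -
  have aapos: "aa > 0" unfolding aa_def using apos .
  define q where "q \<beta> = cc * \<beta> / (lam * sin \<beta>)" for \<beta>
  define g0 where "g0 = ln (XX (cc / lam))"
  have X0: "XX (cc / lam) > 1" using XX_props(4)[of "cc/lam"] cc lamp by simp
  have g0pos: "g0 > 0" unfolding g0_def using X0 by simp
  define \<delta> where "\<delta> = (cs - cc) * g0 / 2"
  have dpos: "\<delta> > 0" unfolding \<delta>_def using cc g0pos by simp
  define R where "R \<beta> = (aa - \<delta>) + lam * ((XX (q \<beta>) + real k / XX (q \<beta>)) * cos \<beta> - (real k + 1))
                         - cc * ln (XX (q \<beta>))" for \<beta>
  have eg0: "exp g0 = XX (cc / lam)" unfolding g0_def using XX_props(1) by simp
  have eg0m: "exp (- g0) = 1 / XX (cc / lam)" unfolding g0_def using XX_props(1) by (simp add: exp_minus divide_inverse)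
  define R0 where "R0 = (aa - \<delta>) + lam * ((XX (cc / lam) + real k / XX (cc / lam)) * 1 - (real k + 1))
                         - cc * ln (XX (cc / lam))"
  have R0a: "R0 = (aa - \<delta>) + lam * ((XX (cc / lam) + real k / XX (cc / lam)) - (real k + 1)) - cc * g0"
    unfolding R0_def g0_def by simp
  have Ga: "G g0 = aa + lam * (XX (cc / lam) - (real k + 1) + real k * (1 / XX (cc / lam)))"
    unfolding G_def aa_def by (simp only: eg0 eg0m)
  have R0: "R0 = G g0 - \<delta> - cc * g0"
    unfolding R0a Ga by (simp add: algebra_simps)
  have "G g0 / g0 \<ge> cs" using cs_le[OF g0pos] .
  hence "G g0 \<ge> cs * g0" using g0pos by (simp add: pos_le_divide_eq)
  moreover have "cc * g0 < cs * g0" using cc g0pos by simp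
  moreover have "(cs - cc) * g0 = cs * g0 - cc * g0" by (simp add: algebra_simps)
  ultimately have R0pos: "R0 > 0" unfolding R0 \<delta>_def by linarith
  have q_eq: "q = (\<lambda>\<beta>. cc / lam * inverse (sin \<beta> / \<beta>))"
    unfolding q_def by (rule ext) (simp add: divide_inverse mult_ac)
  have qlim: "(q \<longlongrightarrow> cc / lam * inverse 1) (at_right 0)"
    unfolding q_eq by (intro tendsto_intros sinx_over_x) simp
  hence qlim': "(q \<longlongrightarrow> cc / lam) (at_right 0)" by simp
  have XXlim: "((\<lambda>\<beta>. XX (q \<beta>)) \<longlongrightarrow> XX (cc / lam)) (at_right 0)"
    unfolding XX_def by (intro tendsto_intros qlim') auto
  have "(R \<longlongrightarrow> (aa - \<delta>) + lam * ((XX (cc / lam) + real k / XX (cc / lam)) * cos 0 - (real k + 1))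
                         - cc * ln (XX (cc / lam))) (at_right 0)"
    unfolding R_def by (intro tendsto_intros XXlim) (use X0 in auto)
  hence Rlim: "(R \<longlongrightarrow> R0) (at_right 0)" unfolding R0_def by simp
  have "eventually (\<lambda>\<beta>. R \<beta> > 0) (at_right 0)"
    using Rlim R0pos order_tendstoD(1) by blast
  then obtain b where b: "b > 0" "\<And>\<beta>. 0 < \<beta> \<Longrightarrow> \<beta> < b \<Longrightarrow> R \<beta> > 0"
    unfolding eventually_at_right_field by auto
  define e2 where "e2 = min 1 (cc / (2 * aa))"
  have e2: "0 < e2" "e2 \<le> 1" "e2 \<le> cc / (2 * aa)" unfolding e2_def using cc aapos by auto
  define \<beta>2 where "\<beta>2 = pi - e2"
  have pi3: "pi > 3" using pi_gt3 .
  have b2: "0 < \<beta>2" "\<beta>2 < pi" "\<beta>2 \<ge> 2" unfolding \<beta>2_def using e2 pi3 by auto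
  have sinb2: "sin \<beta>2 = sin e2" unfolding \<beta>2_def by (simp add: sin_diff)
  have cosb2: "cos \<beta>2 = - cos e2" unfolding \<beta>2_def by (simp add: cos_diff)
  have se2: "0 < sin e2" "sin e2 \<le> e2" using sin_gt_zero[of e2] e2 pi3 sin_x_le_x[of e2] by auto
  have ce2: "cos e2 \<ge> 1/2"
  proof -
    have "cos (pi/3) \<le> cos e2" using e2 pi3 by (intro cos_monotone_0_pi_le) auto
    thus ?thesis by (simp add: cos_60)
  qed
  have Rb2: "R \<beta>2 < 0"
  proof -
    define y where "y = q \<beta>2"
    have ypos: "y > 0" unfolding y_def q_def using cc lamp sin_gt_zero[OF b2(1,2)] b2 by simp
    have Xy: "XX y \<ge> y" "XX y > 1" using XX_props(3,4) ypos by auto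
    have cneg: "cos \<beta>2 < 0" using cosb2 ce2 by simp
    have Xk: "XX y + real k / XX y \<ge> XX y" using Xy by simp
    have "(XX y + real k / XX y) * cos \<beta>2 \<le> XX y * cos \<beta>2"
      by (rule mult_right_mono_neg[OF Xk]) (use cneg in linarith)
    also have "\<dots> \<le> y * cos \<beta>2"
      by (rule mult_right_mono_neg[OF Xy(1)]) (use cneg in linarith)
    finally have t1: "lam * ((XX y + real k / XX y) * cos \<beta>2) \<le> lam * (y * cos \<beta>2)"
      using lamp by (intro mult_left_mono) auto
    have sb2: "sin \<beta>2 > 0" using sin_gt_zero[OF b2(1,2)] .
    have "lam * (y * cos \<beta>2) = cc * (\<beta>2 * cos \<beta>2) / sin \<beta>2"
      unfolding y_def q_def using lamp sb2 by simp
    also have "\<dots> \<le> cc * (-1) / sin \<beta>2"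
    proof -
      have "\<beta>2 * cos \<beta>2 \<le> 2 * cos \<beta>2"
        by (rule mult_right_mono_neg) (use cneg b2 in linarith)+
      also have "\<dots> \<le> -1" using cosb2 ce2 by linarith
      finally have "\<beta>2 * cos \<beta>2 \<le> -1" .
      hence "cc * (\<beta>2 * cos \<beta>2) \<le> cc * (-1)" using cc by (intro mult_left_mono) auto
      thus ?thesis using sb2 by (intro divide_right_mono) auto
    qed
    also have "\<dots> = - (cc / sin \<beta>2)" by simp
    also have "\<dots> \<le> - (cc / e2)"
    proof -
      have "cc / e2 \<le> cc / sin \<beta>2" using cc sb2 se2 sinb2 by (intro divide_left_mono) auto
      thus ?thesis by linarith
    qed
    also have "\<dots> \<le> - 2 * aa"
    proof -
      have "cc / e2 \<ge> cc / (cc / (2 * aa))" using e2 cc aapos by (intro divide_left_mono) auto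
      moreover have "cc / (cc / (2 * aa)) = 2 * aa" using cc aapos by simp
      ultimately show ?thesis by linarith
    qed
    finally have t2: "lam * ((XX y + real k / XX y) * cos \<beta>2) \<le> - 2 * aa" using t1 by linarith
    have "ln (XX y) \<ge> 0" using Xy by simp
    hence "cc * ln (XX y) \<ge> 0" using cc by simp
    moreover have "lam * (real k + 1) \<ge> 0" using lamp by simp
    moreover have "R \<beta>2 = (aa - \<delta>) + lam * ((XX y + real k / XX y) * cos \<beta>2) - lam * (real k + 1) - cc * ln (XX y)"
      unfolding R_def y_def by (simp only: right_diff_distrib)
    ultimately show ?thesis using t2 dpos aapos by linarith
  qed
  define \<beta>1 where "\<beta>1 = min b \<beta>2 / 2"
  have b1: "0 < \<beta>1" "\<beta>1 < b" "\<beta>1 < \<beta>2" unfolding \<beta>1_def using b b2 by auto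
  have Rb1: "R \<beta>1 > 0" using b(2) b1 by simp
  have contR: "continuous_on {\<beta>1..\<beta>2} R"
  proof -
    have sinpos: "\<forall>x\<in>{\<beta>1..\<beta>2}. sin x > 0" using b1 b2 by (auto intro!: sin_gt_zero)
    have contq: "continuous_on {\<beta>1..\<beta>2} q"
      unfolding q_def using sinpos lamp by (intro continuous_intros) auto
    have Xpos: "\<forall>x\<in>{\<beta>1..\<beta>2}. XX (q x) > 0" using XX_props(1) by auto
    have contX: "continuous_on {\<beta>1..\<beta>2} (\<lambda>\<beta>. XX (q \<beta>))"
      unfolding XX_def by (intro continuous_intros contq) auto
    show ?thesis unfolding R_def
      using Xpos by (intro continuous_intros contX) auto
  qed
  obtain \<beta> where \<beta>: "\<beta>1 \<le> \<beta>" "\<beta> \<le> \<beta>2" "R \<beta> = 0"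
    using IVT2'[of R \<beta>2 0 \<beta>1, OF _ _ _ contR] Rb1 Rb2 b1 by auto
  define g where "g = ln (XX (q \<beta>))"
  have bpi: "0 < \<beta>" "\<beta> < pi" using \<beta> b1 b2 by auto
  have qpos: "q \<beta> > 0" unfolding q_def using cc lamp sin_gt_zero[OF bpi] bpi by simp
  have gpos: "g > 0" unfolding g_def using XX_props(4)[of "q \<beta>"] qpos by simp
  have eg: "exp g = XX (q \<beta>)" unfolding g_def using XX_props(1) by simp
  have egm: "exp (- g) = 1 / XX (q \<beta>)" unfolding g_def using XX_props(1) by (simp add: exp_minus divide_inverse)
  have im: "lam * sin \<beta> * (exp g - real k * exp (- g)) = cc * \<beta>"
  proof -
    have "exp g - real k * exp (- g) = q \<beta>" using eg egm XX_props(2)[of "q \<beta>"] by simp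
    moreover have "lam * sin \<beta> \<noteq> 0" using lamp sin_gt_zero[OF bpi] by simp
    ultimately show ?thesis unfolding q_def by simp
  qed
  have "R \<beta> = (aa - \<delta>) + lam * ((exp g + real k * exp (- g)) * cos \<beta> - (real k + 1)) - cc * g"
    unfolding R_def g_def[symmetric] eg egm by simp
  hence re: "(aa - \<delta>) + lam * ((exp g + real k * exp (- g)) * cos \<beta> - (real k + 1)) = cc * g"
    using \<beta>(3) by simp
  show ?thesis using dpos gpos bpi im re by blast
qed

end

definition phi :: "real \<Rightarrow> real \<Rightarrow> real \<Rightarrow> real" where
  "phi g b x = exp (- g * x) * sin (b * x)"

definition dphi :: "real \<Rightarrow> real \<Rightarrow> real \<Rightarrow> real" where
  "dphi g b x = exp (- g * x) * (- g * sin (b * x) + b * cos (b * x))"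

definition psi :: "real \<Rightarrow> real \<Rightarrow> real \<Rightarrow> real" where
  "psi g b x = phi g b (max 0 (min (pi / b) x))"

lemma phi_deriv: "(phi g b has_real_derivative dphi g b x) (at x)"
  unfolding phi_def dphi_def by (auto intro!: derivative_eq_intros simp: algebra_simps)

lemma psi_cont: "continuous_on UNIV (psi g b)"
  unfolding psi_def phi_def by (intro continuous_intros)

lemma psi_bounds:
  assumes g: "g > 0" and b: "0 < b" "b < pi"
  shows "0 \<le> psi g b x" "psi g b x \<le> 1"
proof -
  define y where "y = max 0 (min (pi / b) x)"
  have y: "0 \<le> y" "y \<le> pi / b" unfolding y_def using b by auto
  have by_: "0 \<le> b * y" "b * y \<le> pi" using y b by (auto simp: field_simps)
  have "sin (b * y) \<ge> 0" using by_ by (intro sin_ge_zero) auto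
  thus "0 \<le> psi g b x" unfolding psi_def y_def[symmetric] phi_def by simp
  have "exp (- g * y) \<le> 1" using g y by (simp add: mult_nonneg_nonneg)
  moreover have "sin (b * y) \<le> 1" by simp
  ultimately show "psi g b x \<le> 1" unfolding psi_def y_def[symmetric] phi_def
    using \<open>sin (b * y) \<ge> 0\<close> by (simp add: mult_le_one)
qed

lemma psi_pos_range:
  assumes b: "0 < b" and p: "psi g b x > 0"
  shows "0 < x" "x < pi / b"
proof -
  show "0 < x"
  proof (rule ccontr)
    assume "\<not> 0 < x"
    moreover have "pi / b > 0" using b by simp
    ultimately have "max 0 (min (pi / b) x) = 0" by (auto simp: max_def min_def)
    thus False using p unfolding psi_def phi_def by simp
  qed
  show "x < pi / b"
  proof (rule ccontr)
    assume "\<not> x < pi / b"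
    hence "max 0 (min (pi / b) x) = pi / b" using b by (auto simp: max_def min_def)
    moreover have "sin (b * (pi / b)) = 0" using b by simp
    ultimately show False using p unfolding psi_def phi_def by simp
  qed
qed

lemma psi_eq_phi: "0 \<le> x \<Longrightarrow> x \<le> pi / b \<Longrightarrow> psi g b x = phi g b x"
  unfolding psi_def by (simp add: max_def min_def)

lemma psi_ge_phi_nb:
  assumes b: "0 < b" "b < pi" and x: "0 < x" "x < pi / b"
  shows "psi g b (x - 1) \<ge> phi g b (x - 1)" "psi g b (x + 1) \<ge> phi g b (x + 1)"
proof -
  have pb: "pi / b > 1" using b by (simp add: field_simps)
  show "psi g b (x - 1) \<ge> phi g b (x - 1)"
  proof (cases "x - 1 \<ge> 0")
    case True thus ?thesis using psi_eq_phi[of "x - 1" b g] x by simp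
  next
    case False
    have "b * (x - 1) < 0" using False b by (simp add: mult_pos_neg)
    moreover have "b * (x - 1) > - pi"
    proof -
      have "b * (x - 1) > b * (-1)" using b x by (intro mult_strict_left_mono) auto
      thus ?thesis using b by simp
    qed
    ultimately have "sin (- (b * (x - 1))) > 0" by (intro sin_gt_zero) auto
    hence "sin (b * (x - 1)) < 0" by simp
    hence "phi g b (x - 1) \<le> 0" unfolding phi_def by (simp add: mult_pos_neg less_imp_le)
    moreover have "psi g b (x - 1) = 0" using False b unfolding psi_def phi_def by (simp add: max_def min_def)
    ultimately show ?thesis by simp
  qed
  show "psi g b (x + 1) \<ge> phi g b (x + 1)"
  proof (cases "x + 1 \<le> pi / b")
    case True thus ?thesis using psi_eq_phi[of "x + 1" b g] x by simp
  next
    case False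
    have "b * (x + 1) \<ge> pi" using False b by (simp add: field_simps)
    moreover have "b * (x + 1) < 2 * pi"
    proof -
      have "b * (x + 1) < b * (pi / b + 1)" using b x by (intro mult_strict_left_mono) auto
      also have "\<dots> = pi + b" using b by (simp add: field_simps)
      finally show ?thesis using b by simp
    qed
    ultimately have "sin (b * (x + 1)) \<le> 0" by (intro sin_le_zero) auto
    hence "phi g b (x + 1) \<le> 0" unfolding phi_def by (simp add: mult_nonneg_nonpos)
    moreover have "psi g b (x + 1) \<ge> 0"
    proof -
      have "max 0 (min (pi / b) (x + 1)) = pi / b" using False b by (simp add: max_def min_def)
      hence "psi g b (x + 1) = 0" unfolding psi_def phi_def using b by simp
      thus ?thesis by simp
    qed
    ultimately show ?thesis by simp
  qed
qed

context sirI begin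

lemma phi_identity:
  assumes im: "lam * sin b * (exp g - real k * exp (- g)) = cc * b"
    and re: "(aa - \<delta>) + lam * ((exp g + real k * exp (- g)) * cos b - (real k + 1)) = cc * g"
  shows "lam * (phi g b (x - 1) + real k * phi g b (x + 1)) + (aa - \<delta> - lam * (real k + 1)) * phi g b x
         + cc * dphi g b x = 0"
proof -
  define E1 where "E1 = (aa - \<delta>) + lam * ((exp g + real k * exp (- g)) * cos b - (real k + 1)) - cc * g"
  define E2 where "E2 = lam * sin b * (exp g - real k * exp (- g)) - cc * b"
  have e1: "E1 = 0" using re unfolding E1_def by simp
  have e2: "E2 = 0" using im unfolding E2_def by simp
  have x1: "exp (- g * (x - 1)) = exp (- g * x) * exp g" by (simp add: exp_add[symmetric] algebra_simps)
  have x2: "exp (- g * (x + 1)) = exp (- g * x) * exp (- g)" by (simp add: exp_add[symmetric] algebra_simps)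
  have s1: "sin (b * (x - 1)) = sin (b * x) * cos b - cos (b * x) * sin b"
    by (simp add: right_diff_distrib sin_diff)
  have s2: "sin (b * (x + 1)) = sin (b * x) * cos b + cos (b * x) * sin b"
    by (simp add: distrib_left sin_add)
  have "lam * (phi g b (x - 1) + real k * phi g b (x + 1)) + (aa - \<delta> - lam * (real k + 1)) * phi g b x
         + cc * dphi g b x = exp (- g * x) * (sin (b * x) * E1 - cos (b * x) * E2)"
    unfolding phi_def dphi_def x1 x2 s1 s2 E1_def E2_def by (simp add: algebra_simps)
  thus ?thesis using e1 e2 by simp
qed

lemma bump_cmp:
  assumes cc: "0 < cc" and dpos: "\<delta> > 0" and g: "g > 0" and b: "0 < b" "b < pi"
    and im: "lam * sin b * (exp g - real k * exp (- g)) = cc * b"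
    and re: "(aa - \<delta>) + lam * ((exp g + real k * exp (- g)) * cos b - (real k + 1)) = cc * g"
    and eps: "0 < \<epsilon>" "\<epsilon> \<le> \<delta> / (s0 * tau^2)"
    and s: "s \<ge> 0" and T: "s \<le> T"
    and init: "\<And>n. n \<ge> 1 \<Longrightarrow> \<epsilon> * psi g b (real n - 1) \<le> I n s"
  shows "\<forall>n\<ge>1. \<forall>t\<in>{s..T}. \<epsilon> * psi g b (real n - 1 - cc * (t - s)) \<le> I n t"
proof (rule cmp_sys[where B=\<epsilon> and Kf="s0 * tau" and u="\<lambda>n t. \<epsilon> * psi g b (real n - 1 - cc * (t - s))" and v=I])
  show "s \<le> T" by fact
  show "continuous_on {s..T} (\<lambda>t. \<epsilon> * psi g b (real n - 1 - cc * (t - s)))" for n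
    by (intro continuous_intros continuous_on_compose2[OF psi_cont]) auto
  show "continuous_on {s..T} (I n)" if "n \<ge> 1" for n using I_cont that s by simp
  show "\<epsilon> * psi g b (real n - 1 - cc * (t - s)) - I n t \<le> \<epsilon>" if "n \<ge> 1" "t \<in> {s..T}" for n t
  proof -
    have "psi g b (real n - 1 - cc * (t - s)) \<le> 1" using psi_bounds g b by blast
    hence "\<epsilon> * psi g b (real n - 1 - cc * (t - s)) \<le> \<epsilon>" using eps by (simp add: mult_left_le)
    thus ?thesis using I_nonneg[of n t] that s by auto
  qed
  show "\<epsilon> * psi g b (real n - 1 - cc * (s - s)) \<le> I n s" if "n \<ge> 1" for n
    using init[OF that] by simp
  show "f (\<epsilon> * psi g b (real n - 1 - cc * (t - s))) - f (I n t) \<le> s0 * tau * (\<epsilon> * psi g b (real n - 1 - cc * (t - s)) - I n t)"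
    if "n \<ge> 1" "s \<le> t" "t < T" "I n t < \<epsilon> * psi g b (real n - 1 - cc * (t - s))" for n t
    using f_lip0[of "I n t"] that I_nonneg[of n t] s by simp
  show "dini_le (\<lambda>s. - I n s) t (- F (\<lambda>j. I j t) n)" if "n \<ge> 1" "s \<le> t" for n t
    using dini_negI that s by simp
  show "dini_le (\<lambda>t. \<epsilon> * psi g b (real n - 1 - cc * (t - s))) t (F (\<lambda>j. \<epsilon> * psi g b (real j - 1 - cc * (t - s))) n)"
    if n1: "n \<ge> 1" and st: "s \<le> t" "t < T" and lt: "I n t < \<epsilon> * psi g b (real n - 1 - cc * (t - s))" for n t
  proof -
    define x where "x = real n - 1 - cc * (t - s)"
    define Lb where "Lb = pi / b"
    have "\<epsilon> * psi g b x > 0" using lt I_nonneg[of n t] n1 st s unfolding x_def by linarith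
    hence "psi g b x > 0" using eps(1) by (simp add: zero_less_mult_iff)
    hence x: "0 < x" "x < Lb" using psi_pos_range[OF b(1)] unfolding Lb_def by auto
    have n2: "n \<ge> 2"
    proof (rule ccontr)
      assume "\<not> n \<ge> 2"
      hence "n = 1" using n1 by simp
      hence "x = - cc * (t - s)" unfolding x_def by simp
      moreover have "cc * (t - s) \<ge> 0" using cc st by simp
      ultimately show False using x by simp
    qed
    define S where "S = {t'. 0 < real n - 1 - cc * (t' - s) \<and> real n - 1 - cc * (t' - s) < Lb}"
    have Sopen: "open S" unfolding S_def
      by (intro open_Collect_conj open_Collect_less continuous_intros)
    have tS: "t \<in> S" unfolding S_def using x unfolding x_def by simp
    have eqS: "\<epsilon> * phi g b (real n - 1 - cc * (t' - s)) = \<epsilon> * psi g b (real n - 1 - cc * (t' - s))"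
      if "t' \<in> S" for t'
      using that psi_eq_phi[of "real n - 1 - cc * (t' - s)" b g] unfolding S_def Lb_def by auto
    have d0: "((\<lambda>t'. \<epsilon> * phi g b (real n - 1 - cc * (t' - s))) has_real_derivative (\<epsilon> * (dphi g b x * (- cc)))) (at t)"
    proof -
      have dd: "((\<lambda>t'. real n - 1 - cc * (t' - s)) has_real_derivative (- cc)) (at t)"
        by (auto intro!: derivative_eq_intros)
      have "((\<lambda>t'. phi g b (real n - 1 - cc * (t' - s))) has_real_derivative (dphi g b x * (- cc))) (at t)"
        using DERIV_chain2[OF phi_deriv dd] unfolding x_def .
      thus ?thesis by (rule DERIV_cmult)
    qed
    have d1: "((\<lambda>t'. \<epsilon> * psi g b (real n - 1 - cc * (t' - s))) has_real_derivative (\<epsilon> * (dphi g b x * (- cc)))) (at t)"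
      by (rule has_field_derivative_transform_within_open[OF d0 Sopen tS eqS])
    show ?thesis
    proof (rule dini_mono[OF dini_deriv[OF has_field_derivative_at_within[OF d1]]])
      have un: "\<epsilon> * psi g b (real n - 1 - cc * (t - s)) = \<epsilon> * phi g b x"
        using psi_eq_phi[of x b g] x unfolding x_def Lb_def by simp
      have um: "\<epsilon> * psi g b (real (n - 1) - 1 - cc * (t - s)) = \<epsilon> * psi g b (x - 1)"
        using n1 unfolding x_def by (simp add: of_nat_diff algebra_simps)
      have up: "\<epsilon> * psi g b (real (n + 1) - 1 - cc * (t - s)) = \<epsilon> * psi g b (x + 1)"
        unfolding x_def by (simp add: algebra_simps)
      have pm: "psi g b (x - 1) \<ge> phi g b (x - 1)" and pp: "psi g b (x + 1) \<ge> phi g b (x + 1)"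
        using psi_ge_phi_nb[OF b x[unfolded Lb_def]] by auto
      define un' where "un' = \<epsilon> * phi g b x"
      have un0: "un' \<ge> 0" "un' \<le> \<epsilon>" unfolding un'_def
        using un psi_bounds[OF g b, of "real n - 1 - cc * (t - s)"] eps
        by (auto simp: mult_left_le)
      have fsm: "f un' \<ge> (aa - \<delta>) * un'"
      proof -
        have f1: "f un' \<ge> (s0 * tau - eta) * un' - s0 * tau^2 * un'^2" by (rule f_ge_small[OF un0(1)])
        have "s0 * tau^2 * un' \<le> s0 * tau^2 * (\<delta> / (s0 * tau^2))"
          using un0 eps s0p taup by (intro mult_left_mono) auto
        hence f2: "s0 * tau^2 * un' \<le> \<delta>" using s0p taup by simp
        have f3: "(s0 * tau^2 * un') * un' \<le> \<delta> * un'" using f2 un0 by (intro mult_right_mono) auto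
        have f4: "s0 * tau^2 * un'^2 = (s0 * tau^2 * un') * un'" by (simp add: power2_eq_square)
        have f5: "(aa - \<delta>) * un' = (s0 * tau - eta) * un' - \<delta> * un'" unfolding aa_def by (simp add: algebra_simps)
        show ?thesis using f1 f3 f4 f5 by linarith
      qed
      have idt: "lam * (phi g b (x - 1) + real k * phi g b (x + 1)) + (aa - \<delta> - lam * (real k + 1)) * phi g b x
         + cc * dphi g b x = 0" by (rule phi_identity[OF im re])
      have "F (\<lambda>j. \<epsilon> * psi g b (real j - 1 - cc * (t - s))) n
            = f un' + lam * (\<epsilon> * psi g b (x - 1) - (real k + 1) * un' + real k * (\<epsilon> * psi g b (x + 1)))"
      proof -
        have "F (\<lambda>j. \<epsilon> * psi g b (real j - 1 - cc * (t - s))) n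
            = f (\<epsilon> * psi g b (real n - 1 - cc * (t - s))) + lam * (\<epsilon> * psi g b (real (n - 1) - 1 - cc * (t - s))
               - (real k + 1) * (\<epsilon> * psi g b (real n - 1 - cc * (t - s))) + real k * (\<epsilon> * psi g b (real (n + 1) - 1 - cc * (t - s))))"
          using n2 unfolding F_def by (intro if_not_P) simp
        thus ?thesis unfolding um up un un'_def .
      qed
      also have "\<dots> \<ge> (aa - \<delta>) * un' + lam * (\<epsilon> * phi g b (x - 1) - (real k + 1) * un' + real k * (\<epsilon> * phi g b (x + 1)))"
      proof -
        have "\<epsilon> * psi g b (x - 1) \<ge> \<epsilon> * phi g b (x - 1)" using pm eps by (intro mult_left_mono) auto
        moreover have "real k * (\<epsilon> * psi g b (x + 1)) \<ge> real k * (\<epsilon> * phi g b (x + 1))"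
          using pp eps by (intro mult_left_mono) auto
        ultimately have "lam * (\<epsilon> * phi g b (x - 1) - (real k + 1) * un' + real k * (\<epsilon> * phi g b (x + 1)))
             \<le> lam * (\<epsilon> * psi g b (x - 1) - (real k + 1) * un' + real k * (\<epsilon> * psi g b (x + 1)))"
          using lamp by (intro mult_left_mono) auto
        thus ?thesis using fsm by linarith
      qed
      finally have "F (\<lambda>j. \<epsilon> * psi g b (real j - 1 - cc * (t - s))) n \<ge>
           \<epsilon> * (lam * (phi g b (x - 1) + real k * phi g b (x + 1)) + (aa - \<delta> - lam * (real k + 1)) * phi g b x)"
        unfolding un'_def by (simp add: algebra_simps)
      also have "\<epsilon> * (lam * (phi g b (x - 1) + real k * phi g b (x + 1)) + (aa - \<delta> - lam * (real k + 1)) * phi g b x)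
           = \<epsilon> * (dphi g b x * (- cc))"
      proof -
        have "lam * (phi g b (x - 1) + real k * phi g b (x + 1)) + (aa - \<delta> - lam * (real k + 1)) * phi g b x
              = - (cc * dphi g b x)" using idt by linarith
        thus ?thesis by (simp add: mult.commute)
      qed
      finally show "\<epsilon> * (dphi g b x * (- cc)) \<le> F (\<lambda>j. \<epsilon> * psi g b (real j - 1 - cc * (t - s))) n" .
    qed
  qed
qed

lemma lower_spread:
  assumes c1: "0 < c1" "c1 < cs"
  shows "\<exists>m1>0. \<exists>T0. \<forall>t\<ge>T0. \<forall>n\<ge>1. real n \<le> c1 * t \<longrightarrow> I n t \<ge> m1"
proof -
  define cc where "cc = (c1 + cs) / 2"
  have cc: "0 < cc" "cc < cs" "c1 < cc" unfolding cc_def using c1 by auto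
  obtain \<delta> g b where dpos: "\<delta> > 0" and g: "g > 0" and b: "0 < b" "b < pi"
    and im: "lam * sin b * (exp g - real k * exp (- g)) = cc * b"
    and re: "(aa - \<delta>) + lam * ((exp g + real k * exp (- g)) * cos b - (real k + 1)) = cc * g"
    using root_exists[OF cc(1,2)] by blast
  define Lb where "Lb = pi / b"
  have Lb: "Lb > 1" unfolding Lb_def using b by (simp add: field_simps)
  define N where "N = nat \<lceil>1 + Lb\<rceil>"
  have N1: "N \<ge> 1" unfolding N_def using Lb by linarith
  have nN: "n \<le> N" if "real n \<le> 1 + Lb" for n unfolding N_def using that by linarith
  define \<epsilon>0 where "\<epsilon>0 = Min ((\<lambda>n. Wp n 1) ` {1..N})"
  have e0pos: "\<epsilon>0 > 0" unfolding \<epsilon>0_def using N1 Wp1_pos by (subst Min_gr_iff) auto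
  have e0le: "\<epsilon>0 \<le> Wp n 1" if "1 \<le> n" "n \<le> N" for n
    unfolding \<epsilon>0_def using that by (intro Min_le) auto
  define \<epsilon> where "\<epsilon> = min \<epsilon>0 (\<delta> / (s0 * tau^2))"
  have eps: "0 < \<epsilon>" "\<epsilon> \<le> \<delta> / (s0 * tau^2)" "\<epsilon> \<le> \<epsilon>0"
    unfolding \<epsilon>_def using e0pos dpos s0p taup by auto
  have lowN: "I n t \<ge> \<epsilon>" if "1 \<le> n" "n \<le> N" "t \<ge> 1" for n t
  proof -
    have "I n ((t - 1) + 1) \<ge> Wp n 1" using I_lower_poly[of n "t - 1"] that by simp
    thus ?thesis using e0le[OF that(1,2)] eps by simp
  qed
  have init: "\<epsilon> * psi g b (real n - 1) \<le> I n s" if "n \<ge> 1" "s \<ge> 1" for n s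
  proof (cases "psi g b (real n - 1) > 0")
    case True
    hence "real n - 1 < Lb" using psi_pos_range[OF b(1)] unfolding Lb_def by blast
    hence "n \<le> N" using nN by simp
    hence "I n s \<ge> \<epsilon>" using lowN that by simp
    moreover have "\<epsilon> * psi g b (real n - 1) \<le> \<epsilon>"
      using psi_bounds(2)[OF g b] eps by (simp add: mult_left_le)
    ultimately show ?thesis by simp
  next
    case False
    hence "psi g b (real n - 1) = 0" using psi_bounds(1)[OF g b, of "real n - 1"] by simp
    thus ?thesis using I_nonneg[of n s] that by simp
  qed
  define m1 where "m1 = \<epsilon> * psi g b (Lb / 2)"
  have psih: "psi g b (Lb / 2) = exp (- g * (Lb / 2))"
  proof -
    have "psi g b (Lb / 2) = phi g b (Lb / 2)" using psi_eq_phi[of "Lb/2" b g] Lb unfolding Lb_def by simp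
    moreover have "b * (Lb / 2) = pi / 2" unfolding Lb_def using b by simp
    ultimately show ?thesis unfolding phi_def by simp
  qed
  have m1pos: "m1 > 0" unfolding m1_def psih using eps by simp
  have m1le: "m1 \<le> \<epsilon>" unfolding m1_def using psi_bounds(2)[OF g b] eps by (simp add: mult_left_le)
  define T0 where "T0 = max 1 (cc / (cc - c1))"
  have "\<forall>t\<ge>T0. \<forall>n\<ge>1. real n \<le> c1 * t \<longrightarrow> I n t \<ge> m1"
  proof (intro allI impI)
    fix t :: real and n :: nat assume t: "t \<ge> T0" and n1: "n \<ge> 1" and nc: "real n \<le> c1 * t"
    have t1: "t \<ge> 1" using t unfolding T0_def by simp
    show "I n t \<ge> m1"
    proof (cases "real n - 1 \<le> Lb / 2")
      case True
      hence "n \<le> N" using nN Lb by simp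
      thus ?thesis using lowN[OF n1 _ t1] m1le by simp
    next
      case False
      define s where "s = t - (real n - 1 - Lb / 2) / cc"
      have st: "s \<le> t" unfolding s_def using False cc by simp
      have s1: "s \<ge> 1"
      proof -
        have "(real n - 1 - Lb / 2) / cc \<le> real n / cc" using cc Lb by (intro divide_right_mono) auto
        also have "\<dots> \<le> c1 * t / cc" using nc cc by (intro divide_right_mono) auto
        finally have A: "s \<ge> t - c1 * t / cc" unfolding s_def by simp
        have "t - c1 * t / cc = t * ((cc - c1) / cc)" using cc by (simp add: field_simps)
        also have "\<dots> \<ge> cc / (cc - c1) * ((cc - c1) / cc)"
          using t cc unfolding T0_def by (intro mult_right_mono) auto
        also have "cc / (cc - c1) * ((cc - c1) / cc) = 1" using cc by simp
        finally show ?thesis using A by simp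
      qed
      have "\<forall>n\<ge>1. \<forall>t'\<in>{s..t}. \<epsilon> * psi g b (real n - 1 - cc * (t' - s)) \<le> I n t'"
        by (rule bump_cmp[OF cc(1) dpos g b im re eps(1,2) _ st]) (use s1 init in auto)
      hence "\<epsilon> * psi g b (real n - 1 - cc * (t - s)) \<le> I n t" using n1 st by auto
      moreover have "real n - 1 - cc * (t - s) = Lb / 2" unfolding s_def using cc by simp
      ultimately show ?thesis unfolding m1_def by simp
    qed
  qed
  thus ?thesis using m1pos by blast
qed

end

lemma exp_conv: "0 \<le> t \<Longrightarrow> t \<le> 1 \<Longrightarrow> exp ((1 - t) * x + t * y) \<le> (1 - t) * exp x + t * exp (y::real)"
  using convex_onD[OF exp_convex, of t x y] by simp

definition thf :: "real \<Rightarrow> real \<Rightarrow> real \<Rightarrow> real" where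
  "thf th0 kap u = th0 / (th0 + (1 - th0) * exp (- kap * u))"

lemma thf_props:
  assumes th0: "0 < th0" "th0 \<le> 1"
  shows "th0 + (1 - th0) * exp (- kap * u) > 0" "0 < thf th0 kap u" "thf th0 kap u \<le> 1"
    "thf th0 kap 0 = th0" "1 - thf th0 kap u \<le> exp (- kap * u) / th0"
proof -
  have e: "(1 - th0) * exp (- kap * u) \<ge> 0" using th0 by simp
  show den: "th0 + (1 - th0) * exp (- kap * u) > 0" using th0 e by linarith
  show "0 < thf th0 kap u" unfolding thf_def using den th0 by simp
  show "thf th0 kap u \<le> 1" unfolding thf_def using den th0 e by simp
  show "thf th0 kap 0 = th0" unfolding thf_def by simp
  have "1 - thf th0 kap u = (1 - th0) * exp (- kap * u) / (th0 + (1 - th0) * exp (- kap * u))"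
    unfolding thf_def using den by (simp add: field_simps)
  also have "\<dots> \<le> (1 - th0) * exp (- kap * u) / th0"
    using den th0 e by (intro divide_left_mono) auto
  also have "\<dots> \<le> exp (- kap * u) / th0"
    using th0 by (intro divide_right_mono) (auto simp: mult_left_le_one_le)
  finally show "1 - thf th0 kap u \<le> exp (- kap * u) / th0" .
qed

lemma thf_deriv:
  assumes th0: "0 < th0" "th0 \<le> 1"
  shows "(thf th0 kap has_real_derivative (kap * thf th0 kap u * (1 - thf th0 kap u))) (at u)"
proof -
  define D where "D = th0 + (1 - th0) * exp (- kap * u)"
  have D: "D > 0" unfolding D_def using thf_props(1)[OF th0] .
  have "(thf th0 kap has_real_derivative
          - (th0 * ((1 - th0) * (exp (- kap * u) * (- kap)))) / (D * D)) (at u)"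
    unfolding thf_def D_def using D[unfolded D_def]
    by (auto intro!: derivative_eq_intros simp: power2_eq_square)
  moreover have "- (th0 * ((1 - th0) * (exp (- kap * u) * (- kap)))) / (D * D)
       = kap * thf th0 kap u * (1 - thf th0 kap u)"
    unfolding thf_def D_def[symmetric] using D by (simp add: field_simps D_def)
  ultimately show ?thesis by simp
qed

lemma thf_cont: "0 < th0 \<Longrightarrow> th0 \<le> 1 \<Longrightarrow> continuous_on UNIV (thf th0 kap)"
  by (rule DERIV_continuous_on[OF has_field_derivative_at_within[OF thf_deriv]]) auto

context sirI begin

lemma fconc:
  assumes v: "0 < v" and th: "0 \<le> th" "th \<le> 1"
  shows "f (th * v) - th * f v \<ge> s0 * (1 - exp (- tau * v / 2))^2 * (th * (1 - th))"
proof -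
  define E where "E = exp (- tau * v / 2)"
  have E2: "exp (- tau * v) = E * E" unfolding E_def by (simp add: exp_add[symmetric])
  define p where "p = 1 - th + th * exp (- tau * v) - exp (- tau * (th * v))"
  have fp: "f (th * v) - th * f v = s0 * p" unfolding p_def sir_f_def by (simp add: algebra_simps)
  have pb: "p \<ge> (1 - E)^2 * (th * (1 - th))"
  proof (cases "th \<le> 1/2")
    case True
    have "exp (- tau * (th * v)) = exp ((1 - 2 * th) * 0 + (2 * th) * (- tau * v / 2))"
      by (simp add: algebra_simps)
    also have "\<dots> \<le> (1 - 2 * th) * exp 0 + (2 * th) * exp (- tau * v / 2)"
      using True th by (intro exp_conv) auto
    finally have "p \<ge> th * (1 - E)^2" unfolding p_def E2 E_def[symmetric]
      by (simp add: algebra_simps power2_eq_square)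
    moreover have "th * (1 - E)^2 \<ge> (1 - E)^2 * (th * (1 - th))"
    proof -
      have "th * (1 - th) \<le> th * 1" using th by (intro mult_left_mono) auto
      hence "(th * (1 - th)) * (1 - E)^2 \<le> th * (1 - E)^2" by (intro mult_right_mono) auto
      thus ?thesis by (simp add: mult.commute)
    qed
    ultimately show ?thesis by linarith
  next
    case False
    have "exp (- tau * (th * v)) = exp ((1 - (2 - 2 * th)) * (- tau * v) + (2 - 2 * th) * (- tau * v / 2))"
      by (simp add: algebra_simps)
    also have "\<dots> \<le> (1 - (2 - 2 * th)) * exp (- tau * v) + (2 - 2 * th) * exp (- tau * v / 2)"
      using False th by (intro exp_conv) auto
    finally have "p \<ge> (1 - th) * (1 - E)^2" unfolding p_def E2 E_def[symmetric]
      by (simp add: algebra_simps power2_eq_square)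
    moreover have "(1 - th) * (1 - E)^2 \<ge> (1 - E)^2 * (th * (1 - th))"
    proof -
      have "th * (1 - th) \<le> 1 * (1 - th)" using th by (intro mult_right_mono) auto
      hence "(th * (1 - th)) * (1 - E)^2 \<le> (1 - th) * (1 - E)^2" by (intro mult_right_mono) auto
      thus ?thesis by (simp add: mult.commute)
    qed
    ultimately show ?thesis by linarith
  qed
  have "s0 * p \<ge> s0 * ((1 - E)^2 * (th * (1 - th)))" using pb s0p by (intro mult_left_mono) auto
  thus ?thesis using fp unfolding E_def by (simp add: mult.assoc)
qed

definition mu where "mu = s0 * tau + lam * (real k + 1) * exp 1"

lemma relax:
  assumes m: "m > 0" and mI: "\<And>n. n \<ge> 1 \<Longrightarrow> m \<le> Iinf n" and MI: "\<And>n. n \<ge> 1 \<Longrightarrow> Iinf n \<le> M"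
    and s: "s \<ge> 0" and t0: "t0 \<ge> 0"
    and low: "\<And>n. n \<ge> 1 \<Longrightarrow> real n \<le> R \<Longrightarrow> m \<le> I n s"
  shows "\<forall>n\<ge>1. thf (m / M) (s0 * (1 - exp (- tau * m / 2))^2 / M) t0 * Iinf n
                  - m * exp (mu * t0 + real n - R) \<le> I n (s + t0)"
proof -
  have Mm: "M \<ge> m" using mI[of 1] MI[of 1] by simp
  have Mpos: "M > 0" using Mm m by simp
  define th0 where "th0 = m / M"
  have th0: "0 < th0" "th0 \<le> 1" unfolding th0_def using m Mm Mpos by auto
  define C where "C = (1 - exp (- tau * m / 2))^2"
  have C0: "C \<ge> 0" unfolding C_def by simp
  define kap where "kap = s0 * C / M"
  have kap0: "kap \<ge> 0" unfolding kap_def using s0p C0 Mpos by simp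
  define th where "th u = thf th0 kap u" for u
  have thp: "0 < th u" "th u \<le> 1" for u unfolding th_def using thf_props[OF th0] by auto
  define E where "E n t = m * exp (mu * (t - s) + real n - R)" for n :: nat and t
  have Epos: "E n t > 0" for n t unfolding E_def using m by simp
  define W where "W n t = th (t - s) * Iinf n - E n t" for n t
  define u where "u n t = max 0 (W n t)" for n t
  have Iinf0: "Iinf n > 0" if "n \<ge> 1" for n using Iinf_pos that .
  have WleM: "W n t \<le> M" if "n \<ge> 1" for n t
  proof -
    have "th (t - s) * Iinf n \<le> 1 * M" using thp MI[OF that] Iinf0[OF that]
      by (intro mult_mono) auto
    thus ?thesis unfolding W_def using Epos[of n t] by simp
  qed
  have Wder: "(W n has_real_derivative (kap * th (t - s) * (1 - th (t - s)) * Iinf n - mu * E n t)) (at t)" for n t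
  proof -
    have dd: "((\<lambda>t. t - s) has_real_derivative 1) (at t)" by (auto intro!: derivative_eq_intros)
    have d1: "((\<lambda>t. th (t - s)) has_real_derivative (kap * th (t - s) * (1 - th (t - s)))) (at t)"
      using DERIV_chain2[OF thf_deriv[OF th0] dd] unfolding th_def by simp
    show ?thesis unfolding W_def E_def
      by (auto intro!: derivative_eq_intros d1 simp: algebra_simps)
  qed
  have Wcont: "continuous_on UNIV (W n)" for n
    by (rule DERIV_continuous_on[OF has_field_derivative_at_within[OF Wder]])
  have key: "kap * th u * (1 - th u) * Iinf n \<le> f (th u * Iinf n) - th u * f (Iinf n)" if "n \<ge> 1" for n u
  proof -
    have fc: "f (th u * Iinf n) - th u * f (Iinf n) \<ge> s0 * (1 - exp (- tau * Iinf n / 2))^2 * (th u * (1 - th u))"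
      using fconc[OF Iinf0[OF that], of "th u"] thp[of u] by simp
    have "exp (- tau * Iinf n / 2) \<le> exp (- tau * m / 2)" using mI[OF that] taup by simp
    moreover have "exp (- tau * Iinf n / 2) \<le> 1" using Iinf0[OF that] taup by simp
    moreover have "exp (- tau * m / 2) \<le> 1" using m taup by simp
    ultimately have "(1 - exp (- tau * m / 2))^2 \<le> (1 - exp (- tau * Iinf n / 2))^2"
      by (intro power_mono) auto
    hence "s0 * C * (th u * (1 - th u)) \<le> s0 * (1 - exp (- tau * Iinf n / 2))^2 * (th u * (1 - th u))"
      unfolding C_def using s0p thp[of u] by (intro mult_right_mono mult_left_mono) auto
    moreover have "kap * th u * (1 - th u) * Iinf n \<le> s0 * C * (th u * (1 - th u))"
    proof -
      have "kap * th u * (1 - th u) * Iinf n = (s0 * C * (th u * (1 - th u))) * (Iinf n / M)"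
        unfolding kap_def using Mpos by (simp add: field_simps)
      also have "\<dots> \<le> (s0 * C * (th u * (1 - th u))) * 1"
        using MI[OF that] Mpos s0p C0 thp[of u] by (intro mult_left_mono) (auto simp: mult_nonneg_nonneg)
      finally show ?thesis by simp
    qed
    ultimately show ?thesis using fc by linarith
  qed
  have "\<forall>n\<ge>1. \<forall>t\<in>{s..s+t0}. u n t \<le> I n t"
  proof (rule cmp_sys[where B=M and Kf="s0 * tau" and u=u and v=I])
    show "s \<le> s + t0" using t0 by simp
    show "continuous_on {s..s + t0} (u n)" for n
      unfolding u_def by (intro continuous_intros continuous_on_subset[OF Wcont]) auto
    show "continuous_on {s..s + t0} (I n)" if "n \<ge> 1" for n using I_cont that s by simp
    show "u n t - I n t \<le> M" if "n \<ge> 1" "t \<in> {s..s + t0}" for n t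
      using WleM[OF that(1), of t] I_nonneg[of n t] that s Mpos unfolding u_def by auto
    show "u n s \<le> I n s" if n1: "n \<ge> 1" for n
    proof (cases "real n \<le> R")
      case True
      have "th0 * Iinf n \<le> th0 * M" using MI[OF n1] th0 by (intro mult_left_mono) auto
      hence "W n s \<le> th0 * M" unfolding W_def th_def
        using thf_props(4)[OF th0] Epos[of n s] by simp
      also have "th0 * M = m" unfolding th0_def using Mpos by simp
      finally show ?thesis unfolding u_def using low[OF n1 True] I_nonneg[OF n1 s] by simp
    next
      case False
      have "exp (real n - R) > 1" using False by simp
      hence "E n s > m" unfolding E_def using m by simp
      moreover have "th (s - s) * Iinf n \<le> m"
      proof -
        have "th (s - s) * Iinf n = th0 * Iinf n" unfolding th_def using thf_props(4)[OF th0] by simp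
        also have "\<dots> \<le> th0 * M" using MI[OF n1] th0 by (intro mult_left_mono) auto
        also have "th0 * M = m" unfolding th0_def using Mpos by simp
        finally show ?thesis .
      qed
      ultimately have "W n s \<le> 0" unfolding W_def by simp
      thus ?thesis unfolding u_def using I_nonneg[OF n1 s] by simp
    qed
    show "f (u n t) - f (I n t) \<le> s0 * tau * (u n t - I n t)"
      if "n \<ge> 1" "s \<le> t" "t < s + t0" "I n t < u n t" for n t
      using f_lip0[of "I n t" "u n t"] that I_nonneg[of n t] s by simp
    show "dini_le (\<lambda>s. - I n s) t (- F (\<lambda>j. I j t) n)" if "n \<ge> 1" "s \<le> t" for n t
      using dini_negI that s by simp
    show "dini_le (u n) t (F (\<lambda>j. u j t) n)"
      if n1: "n \<ge> 1" and st: "s \<le> t" "t < s + t0" and lt: "I n t < u n t" for n t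
    proof -
      have I0: "I n t \<ge> 0" using I_nonneg[OF n1] st s by simp
      have Wp: "W n t > 0" using lt I0 unfolding u_def by (cases "0 \<le> W n t") (auto simp: max_def)
      define D2 where "D2 = kap * th (t - s) * (1 - th (t - s)) * Iinf n - mu * E n t"
      have dW: "dini_le (W n) t D2" unfolding D2_def
        by (rule dini_deriv[OF has_field_derivative_at_within[OF Wder]])
      have limW: "(W n \<longlongrightarrow> W n t) (at_right t)"
        using Wcont[of n] by (simp add: continuous_on_def filterlim_at_split)
      have D2le: "D2 \<le> F (\<lambda>j. u j t) n"
      proof -
        define T where "T = th (t - s)"
        have T: "0 < T" "T \<le> 1" unfolding T_def using thp by auto
        have un: "u n t = W n t" unfolding u_def using Wp by simp
        have uj: "u j t \<ge> W j t" for j unfolding u_def by simp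
        have Wj: "W j t = T * Iinf j - E j t" for j unfolding W_def T_def by simp
        have Ep1: "E (n + 1) t = exp 1 * E n t" unfolding E_def by (simp add: exp_add[symmetric] algebra_simps)
        have WleT: "W n t \<le> T * Iinf n" using Wj[of n] Epos[of n t] by simp
        have fW: "f (T * Iinf n) - f (W n t) \<le> s0 * tau * E n t"
          using f_lip0[OF WleT] Wp Wj[of n] by simp
        have kT: "kap * T * (1 - T) * Iinf n \<le> f (T * Iinf n) - T * f (Iinf n)"
          using key[OF n1, of "t - s"] unfolding T_def .
        have e1: "exp (1::real) \<ge> 1" by simp
        have E0: "E n t \<ge> 0" using Epos[of n t] by simp
        have D2T: "D2 = kap * T * (1 - T) * Iinf n - (s0 * tau * E n t + lam * (real k + 1) * exp 1 * E n t)"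
          unfolding D2_def T_def mu_def by (simp add: algebra_simps)
        show ?thesis
        proof (cases "n = 1")
          case True
          have Fu: "F (\<lambda>j. u j t) n = f (W n t) + i0 + lam * (real k + 1) * (u 2 t - W n t)"
            unfolding F_def using un True by simp
          have b: "lam * (real k + 1) * (u 2 t - W n t) \<ge> lam * (real k + 1) * (W 2 t - W n t)"
            using uj[of 2] lamp by (intro mult_left_mono) auto
          have c: "lam * (real k + 1) * (W 2 t - W n t)
               = T * (lam * (real k + 1) * (Iinf 2 - Iinf n)) - lam * (real k + 1) * (E 2 t - E n t)"
            unfolding Wj by (simp add: algebra_simps)
          have d: "lam * (real k + 1) * (Iinf 2 - Iinf n) = - f (Iinf n) - i0"
            using Iinf_F[of 1] True unfolding F_def by simp
          have d2: "T * (- f (Iinf n) - i0) = - (T * f (Iinf n)) - T * i0" by (simp add: algebra_simps)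
          have E2: "E 2 t = exp 1 * E n t" using Ep1 True by (simp add: numeral_2_eq_2)
          have e: "lam * (real k + 1) * (E 2 t - E n t) \<le> lam * (real k + 1) * exp 1 * E n t"
          proof -
            have "E 2 t - E n t \<le> exp 1 * E n t" using E2 E0 by simp
            thus ?thesis using lamp by (simp add: mult.assoc mult_left_mono)
          qed
          have h: "T * i0 \<le> i0" using T i0p by (simp add: mult_left_le_one_le)
          have d3: "T * (lam * (real k + 1) * (Iinf 2 - Iinf n)) = T * (- f (Iinf n) - i0)" using d by simp
          show ?thesis unfolding D2T using Fu b c d3 d2 e h fW kT by linarith
        next
          case False
          hence n2: "n \<ge> 2" using n1 by simp
          have Fu: "F (\<lambda>j. u j t) n = f (W n t) + lam * (u (n - 1) t - (real k + 1) * W n t + real k * u (n + 1) t)"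
            unfolding F_def using un False by simp
          have Em1: "E n t = exp 1 * E (n - 1) t" unfolding E_def using n1
            by (simp add: exp_add[symmetric] of_nat_diff algebra_simps)
          have d: "lam * (Iinf (n - 1) - (real k + 1) * Iinf n + real k * Iinf (n + 1)) = - f (Iinf n)"
            using Iinf_F[OF n1] False unfolding F_def by simp
          have d2: "T * (- f (Iinf n)) = - (T * f (Iinf n))" by simp
          have b: "lam * (u (n - 1) t - (real k + 1) * W n t + real k * u (n + 1) t)
                \<ge> lam * (W (n - 1) t - (real k + 1) * W n t + real k * W (n + 1) t)"
          proof -
            have "real k * W (n + 1) t \<le> real k * u (n + 1) t" using uj[of "n + 1"] by (intro mult_left_mono) auto
            hence "W (n - 1) t - (real k + 1) * W n t + real k * W (n + 1) t \<le> u (n - 1) t - (real k + 1) * W n t + real k * u (n + 1) t"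
              using uj[of "n - 1"] by linarith
            thus ?thesis using lamp by (intro mult_left_mono) auto
          qed
          have c: "lam * (W (n - 1) t - (real k + 1) * W n t + real k * W (n + 1) t)
              = T * (lam * (Iinf (n - 1) - (real k + 1) * Iinf n + real k * Iinf (n + 1)))
                - lam * (E (n - 1) t - (real k + 1) * E n t + real k * E (n + 1) t)"
            unfolding Wj by (simp add: algebra_simps)
          have e: "lam * (E (n - 1) t - (real k + 1) * E n t + real k * E (n + 1) t) \<le> lam * (real k + 1) * exp 1 * E n t"
          proof -
            have e1': "E (n - 1) t \<le> E n t" using Em1 Epos[of "n - 1" t] e1
              by (simp add: mult_le_cancel_right1)
            have e2': "real k * E (n + 1) t = real k * exp 1 * E n t" using Ep1 by simp
            have e3: "real k * exp 1 * E n t \<le> (real k + 1) * exp 1 * E n t"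
              using E0 by (intro mult_right_mono) auto
            have e4: "real k * E n t \<ge> 0" using E0 by simp
            have "E (n - 1) t - (real k + 1) * E n t + real k * E (n + 1) t \<le> (real k + 1) * exp 1 * E n t"
            proof -
              have "(real k + 1) * E n t = real k * E n t + E n t" by (simp add: algebra_simps)
              thus ?thesis using e1' e2' e3 e4 by linarith
            qed
            thus ?thesis using lamp by (simp add: mult.assoc mult_left_mono)
          qed
          have d3: "T * (lam * (Iinf (n - 1) - (real k + 1) * Iinf n + real k * Iinf (n + 1))) = T * (- f (Iinf n))"
            using d by simp
          show ?thesis unfolding D2T using Fu b c d3 d2 e fW kT by linarith
        qed
      qed
      have un_eq: "u n = (\<lambda>s. max 0 (W n s))" unfolding u_def by (rule ext) simp
      show ?thesis unfolding un_eq
        by (rule dini_max[OF dini_const[of 0] dW tendsto_const limW]) (use Wp D2le in auto)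
    qed
  qed
  hence "u n (s + t0) \<le> I n (s + t0)" if "n \<ge> 1" for n using that t0 by auto
  moreover have "W n (s + t0) \<le> u n (s + t0)" for n unfolding u_def by simp
  moreover have "W n (s + t0) = thf (m / M) (s0 * (1 - exp (- tau * m / 2))^2 / M) t0 * Iinf n
                  - m * exp (mu * t0 + real n - R)" for n
    unfolding W_def E_def th_def th0_def kap_def C_def by simp
  ultimately show ?thesis by (metis order_trans)
qed

end

context sirI begin

lemma part_ii:
  assumes c: "c > cs" and e: "\<epsilon> > 0"
  shows "\<forall>\<^sub>F t in at_top. \<forall>n. n \<ge> 1 \<and> real n \<ge> c * t \<longrightarrow> \<bar>I n t\<bar> \<le> \<epsilon>"
proof -
  obtain g where g: "g > 0" "G g / g < c" using cs_above[OF c] by blast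
  define cg where "cg = G g / g"
  define A where "A = i0 * exp g / (lam * (exp g - exp (- g)))"
  have ed: "exp g - exp (- g) > 0" using g by simp
  have Apos: "A > 0" unfolding A_def using ed i0p lamp by simp
  define r where "r = g * (c - cg)"
  have rpos: "r > 0" unfolding r_def cg_def using g by simp
  define T1 where "T1 = max 0 (ln (A / \<epsilon>) / r)"
  have "\<forall>t\<ge>T1. \<forall>n. n \<ge> 1 \<and> real n \<ge> c * t \<longrightarrow> \<bar>I n t\<bar> \<le> \<epsilon>"
  proof (intro allI impI)
    fix t :: real and n :: nat assume t: "t \<ge> T1" and n: "n \<ge> 1 \<and> real n \<ge> c * t"
    have t0: "t \<ge> 0" using t unfolding T1_def by simp
    have "I n t \<le> A * exp (- g * (real n - cg * t))"
      using I_le_exp[OF g(1), of n t] n t0 unfolding A_def cg_def by simp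
    also have "\<dots> \<le> A * exp (- (r * t))"
    proof -
      have "g * (c * t - cg * t) \<le> g * (real n - cg * t)" using n g by (intro mult_left_mono) auto
      hence "- g * (real n - cg * t) \<le> - (r * t)" unfolding r_def by (simp add: algebra_simps)
      thus ?thesis using Apos by simp
    qed
    also have "\<dots> \<le> A * exp (- ln (A / \<epsilon>))"
    proof -
      have "ln (A / \<epsilon>) / r \<le> t" using t unfolding T1_def by simp
      hence "ln (A / \<epsilon>) \<le> r * t" using rpos by (simp add: pos_divide_le_eq mult.commute)
      thus ?thesis using Apos by simp
    qed
    also have "\<dots> = \<epsilon>" using Apos e by (simp add: exp_minus)
    finally show "\<bar>I n t\<bar> \<le> \<epsilon>" using I_nonneg[of n t] n t0 by simp
  qed
  thus ?thesis unfolding eventually_at_top_linorder by blast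
qed

lemma part_i:
  assumes c: "0 < c" "c < cs" and e: "\<epsilon> > 0"
  shows "\<forall>\<^sub>F t in at_top. \<forall>n. 1 \<le> n \<and> real n \<le> c * t \<longrightarrow> \<bar>I n t - Iinf n\<bar> \<le> \<epsilon>"
proof -
  define c1 where "c1 = (c + cs) / 2"
  have c1: "0 < c1" "c1 < cs" "c < c1" unfolding c1_def using c by auto
  obtain m1 T0 where m1: "m1 > 0" and low: "\<And>t n. t \<ge> T0 \<Longrightarrow> n \<ge> 1 \<Longrightarrow> real n \<le> c1 * t \<Longrightarrow> I n t \<ge> m1"
    using lower_spread[OF c1(1,2)] by blast
  have mI: "m1 \<le> Iinf n" if n: "n \<ge> 1" for n
  proof -
    define t where "t = max (max T0 0) (real n / c1)"
    have "real n \<le> c1 * t"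
    proof -
      have "real n / c1 \<le> t" unfolding t_def by simp
      thus ?thesis using c1 by (simp add: pos_divide_le_eq mult.commute)
    qed
    hence "I n t \<ge> m1" using low[of t n] n unfolding t_def by simp
    moreover have "I n t \<le> Iinf n" using I_le_Iinf[OF n] unfolding t_def by simp
    ultimately show ?thesis by simp
  qed
  obtain B where B: "\<forall>n\<ge>1. \<bar>Iinf n\<bar> \<le> B" using Iinf_bdd by blast
  define M where "M = B"
  have MI: "Iinf n \<le> M" if "n \<ge> 1" for n using B that unfolding M_def by force
  have Mm: "M \<ge> m1" using mI[of 1] MI[of 1] by simp
  have Mpos: "M > 0" using Mm m1 by simp
  define th0 where "th0 = m1 / M"
  have th0: "0 < th0" "th0 \<le> 1" unfolding th0_def using m1 Mm Mpos by auto
  define kap where "kap = s0 * (1 - exp (- tau * m1 / 2))^2 / M"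
  have kap: "kap > 0"
  proof -
    have "exp (- tau * m1 / 2) < 1" using taup m1 by simp
    hence "(1 - exp (- tau * m1 / 2))^2 > 0" using taup m1 by simp
    thus ?thesis unfolding kap_def using s0p Mpos by (simp add: divide_pos_pos)
  qed
  define t0 where "t0 = max 0 (ln (2 * M / (th0 * \<epsilon>)) / kap)"
  have t0: "t0 \<ge> 0" unfolding t0_def by simp
  have th_close: "M * exp (- kap * t0) / th0 \<le> \<epsilon> / 2"
  proof -
    have "ln (2 * M / (th0 * \<epsilon>)) / kap \<le> t0" unfolding t0_def by simp
    hence "ln (2 * M / (th0 * \<epsilon>)) \<le> kap * t0"
      using kap by (simp add: pos_divide_le_eq mult.commute)
    hence "exp (- kap * t0) \<le> exp (- ln (2 * M / (th0 * \<epsilon>)))" by simp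
    also have "\<dots> = th0 * \<epsilon> / (2 * M)" using th0 e Mpos by (simp add: exp_minus)
    finally have "M * exp (- kap * t0) \<le> M * (th0 * \<epsilon> / (2 * M))" using Mpos by (intro mult_left_mono) auto
    also have "\<dots> = th0 * (\<epsilon> / 2)" using Mpos by simp
    finally show ?thesis using th0 by (simp add: pos_divide_le_eq mult.commute)
  qed
  define Dd where "Dd = max 0 (mu * t0 + ln (2 * m1 / \<epsilon>))"
  have Dd: "Dd \<ge> 0" unfolding Dd_def by simp
  define T1 where "T1 = max (max T0 0 + t0) ((c1 * t0 + Dd) / (c1 - c))"
  have "\<forall>t\<ge>T1. \<forall>n. 1 \<le> n \<and> real n \<le> c * t \<longrightarrow> \<bar>I n t - Iinf n\<bar> \<le> \<epsilon>"
  proof (intro allI impI)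
    fix t :: real and n :: nat assume t: "t \<ge> T1" and n: "1 \<le> n \<and> real n \<le> c * t"
    define s where "s = t - t0"
    have s: "s \<ge> T0" "s \<ge> 0" unfolding s_def using t unfolding T1_def by auto
    have t_ge0: "t \<ge> 0" using s t0 unfolding s_def by simp
    define R where "R = c1 * s"
    have rel: "\<forall>n\<ge>1. thf (m1 / M) (s0 * (1 - exp (- tau * m1 / 2))^2 / M) t0 * Iinf n
                  - m1 * exp (mu * t0 + real n - R) \<le> I n (s + t0)"
      by (rule relax[OF m1 mI MI s(2) t0]) (use low s(1) R_def in auto)
    have st: "s + t0 = t" unfolding s_def by simp
    define th where "th = thf th0 kap t0"
    have thb: "0 < th" "th \<le> 1" "1 - th \<le> exp (- kap * t0) / th0"
      unfolding th_def using thf_props[OF th0] by auto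
    have A: "th * Iinf n - m1 * exp (mu * t0 + real n - R) \<le> I n t"
      using rel n st unfolding th_def th0_def kap_def by auto
    have nR: "real n - R \<le> - Dd"
    proof -
      have "(c1 * t0 + Dd) / (c1 - c) \<le> t" using t unfolding T1_def by simp
      hence "c1 * t0 + Dd \<le> (c1 - c) * t" using c1 by (simp add: pos_divide_le_eq mult.commute)
      moreover have "real n \<le> c * t" using n by simp
      ultimately show ?thesis unfolding R_def s_def by (simp add: algebra_simps)
    qed
    have B1: "m1 * exp (mu * t0 + real n - R) \<le> \<epsilon> / 2"
    proof -
      have "mu * t0 + real n - R \<le> - ln (2 * m1 / \<epsilon>)" using nR unfolding Dd_def by simp
      hence "exp (mu * t0 + real n - R) \<le> exp (- ln (2 * m1 / \<epsilon>))" by simp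
      also have "\<dots> = \<epsilon> / (2 * m1)" using m1 e by (simp add: exp_minus)
      finally have "m1 * exp (mu * t0 + real n - R) \<le> m1 * (\<epsilon> / (2 * m1))" using m1 by (intro mult_left_mono) auto
      thus ?thesis using m1 by simp
    qed
    have B2: "(1 - th) * Iinf n \<le> \<epsilon> / 2"
    proof -
      have "(1 - th) * Iinf n \<le> (exp (- kap * t0) / th0) * M"
        using thb MI[of n] n Iinf_pos[of n] by (intro mult_mono) auto
      also have "\<dots> = M * exp (- kap * t0) / th0" by simp
      finally show ?thesis using th_close by linarith
    qed
    have up: "I n t \<le> Iinf n" using I_le_Iinf[of n t] n t_ge0 by simp
    have "th * Iinf n = Iinf n - (1 - th) * Iinf n" by (simp add: algebra_simps)
    thus "\<bar>I n t - Iinf n\<bar> \<le> \<epsilon>" using A B1 B2 up by linarith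
  qed
  thus ?thesis unfolding eventually_at_top_linorder by blast
qed

end

theorem theorem8:
  fixes k :: nat and s0 i0 tau eta lam :: real
    and Iinf :: "nat \<Rightarrow> real" and I :: "nat \<Rightarrow> real \<Rightarrow> real"
  assumes k2: "k \<ge> 2"
    and s0: "0 < s0" "s0 < 1"
    and i0: "0 < i0" "i0 < 1"
    and pos: "tau > 0" "eta > 0" "lam > 0"
    and R0_gt: "R0 s0 tau eta > 1"
    and lam_lt: "lam < lambda_c k s0 tau eta"
    \<comment> \<open>I^inf: a positive bounded solution of the stationary problem\<close>
    and Iinf_pos: "\<And>n. n \<ge> 1 \<Longrightarrow> Iinf n > 0"
    and Iinf_bdd: "\<exists>B. \<forall>n\<ge>1. \<bar>Iinf n\<bar> \<le> B"
    and Iinf_eq: "\<And>n. n \<ge> 2 \<Longrightarrow>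
        0 = sir_f s0 tau eta (Iinf n)
            + lam * (Iinf (n - 1) - (real k + 1) * Iinf n + real k * Iinf (n + 1))"
    and Iinf_eq1: "0 = sir_f s0 tau eta (Iinf 1) + i0
            + lam * (real k + 1) * (- Iinf 1 + Iinf 2)"
    \<comment> \<open>I(t): a solution of the lattice ODE system, bounded on bounded time intervals\<close>
    and I_bdd: "\<And>T. \<exists>B. \<forall>n\<ge>1. \<forall>t\<in>{0..T}. \<bar>I n t\<bar> \<le> B"
    and I_ode: "\<And>n t. n \<ge> 2 \<Longrightarrow> t \<ge> 0 \<Longrightarrow>
        ((I n) has_real_derivative
          (sir_f s0 tau eta (I n t)
           + lam * (I (n - 1) t - (real k + 1) * I n t + real k * I (n + 1) t)))
        (at t within {0..})"
    and I_ode1: "\<And>t. t \<ge> 0 \<Longrightarrow>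
        ((I 1) has_real_derivative
          (sir_f s0 tau eta (I 1 t) + i0 + lam * (real k + 1) * (- I 1 t + I 2 t)))
        (at t within {0..})"
    and I_init: "\<And>n. n \<ge> 1 \<Longrightarrow> I n 0 = 0"
  shows "cstar k s0 tau eta lam > 0
    \<and> (\<forall>c. 0 < c \<and> c < cstar k s0 tau eta lam \<longrightarrow>
          (\<forall>\<epsilon>>0. \<forall>\<^sub>F t in at_top.
             \<forall>n. 1 \<le> n \<and> real n \<le> c * t \<longrightarrow> \<bar>I n t - Iinf n\<bar> \<le> \<epsilon>))
    \<and> (\<forall>c. c > cstar k s0 tau eta lam \<longrightarrow>
          (\<forall>\<epsilon>>0. \<forall>\<^sub>F t in at_top.
             \<forall>n. n \<ge> 1 \<and> real n \<ge> c * t \<longrightarrow> \<bar>I n t\<bar> \<le> \<epsilon>))"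
  proof -
  have R: "s0 * tau - eta > 0"
  proof -
    have "s0 * tau / eta > 1" using R0_gt unfolding R0_def .
    thus ?thesis using pos(2) by (simp add: field_simps)
  qed
  have den: "real k + 1 - 2 * sqrt (real k) > 0"
  proof -
    have "sqrt (real k) > 1" using k2 by simp
    hence "(sqrt (real k) - 1)^2 > 0" by simp
    moreover have "(sqrt (real k) - 1)^2 = real k + 1 - 2 * sqrt (real k)"
      by (simp add: power2_eq_square algebra_simps)
    ultimately show ?thesis by simp
  qed
  have lc: "lam * (real k + 1 - 2 * sqrt (real k)) < s0 * tau - eta"
  proof -
    have "eta * (R0 s0 tau eta - 1) = s0 * tau - eta" unfolding R0_def using pos(2) by (simp add: field_simps)
    hence "lam < (s0 * tau - eta) / (real k + 1 - 2 * sqrt (real k))"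
      using lam_lt unfolding lambda_c_def by simp
    thus ?thesis using den by (simp add: pos_less_divide_eq mult.commute)
  qed
  interpret sirI k s0 tau eta lam i0 I Iinf
  proof (unfold_locales)
    show "2 \<le> k" by fact
    show "0 < s0" by fact
    show "0 < tau" "0 < eta" "0 < lam" by (rule pos)+
    show "0 < i0" by fact
    show "0 < s0 * tau - eta" by fact
    show "lam * (real k + 1 - 2 * sqrt (real k)) < s0 * tau - eta" by fact
  qed (use Iinf_pos Iinf_bdd Iinf_eq Iinf_eq1 I_bdd I_ode I_ode1 I_init in auto)
  show ?thesis
    using cs_pos part_i part_ii unfolding cstar_eq by blast
qed

end
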